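(* Let $a>0$, $b,d,b',d'\in\mathbb{C}$ with positive real parts, $b+d=b'+d'$, $\bar d=b$, $\bar d'=b'$, let $x,y\in\mathbb{R}$ and $k\in\mathbb{Z}_+$. Then $$\sum_{j=0}^k\frac{(-k)_j(2a+b+d)_{2j}\,j!}{(2a)_j(b+d)_j(2a+b+d+j-1)_j(a+d)_j(a+d')_j(2a+b+d+k)_j}\,p_j(x;a,b,a,d)\,p_j(y;a,b',a,d')$$ $$=\frac{(d-ix)_k(d'-iy)_k(2a+b+d)_k}{(a+d)_k(a+d')_k(b+d)_k}\,{}_4F_3\!\left({-k,\ 1-k-b-d,\ a+ix,\ a+iy\atop 2a,\ 1-k-d+ix,\ 1-k-d'+iy};1\right).$$
   Context: Continuous Hahn polynomials: $p_n(x;a,b,c,d)=i^n\frac{(a+c)_n(a+d)_n}{n!}\,{}_3F_2\!\left({-n,\ n+a+b+c+d-1,\ a+ix\atop a+c,\ a+d};1\right)$; $(\alpha)_n$ is the Pochhammer symbol. *)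

theory Defs
  imports Complex_Main
begin

text \<open>For the terminating
  series used here (a numerator parameter -n) all terms beyond n vanish.\<close>

definition hyp_term :: "complex list \<Rightarrow> complex list \<Rightarrow> complex \<Rightarrow> nat \<Rightarrow> complex" where
  "hyp_term as bs z j =
     (\<Prod>a\<leftarrow>as. pochhammer a j) / (\<Prod>b\<leftarrow>bs. pochhammer b j) * z ^ j / fact j"

definition hypergeom :: "complex list \<Rightarrow> complex list \<Rightarrow> complex \<Rightarrow> complex" where
  "hypergeom as bs z = (\<Sum>j. hyp_term as bs z j)"

definition cont_hahn :: "nat \<Rightarrow> real \<Rightarrow> complex \<Rightarrow> complex \<Rightarrow> complex \<Rightarrow> complex \<Rightarrow> complex" where
  "cont_hahn n x a b c d =
     \<i> ^ n * pochhammer (a + c) n * pochhammer (a + d) n / fact n *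
     hypergeom [- of_nat n, of_nat n + a + b + c + d - 1, a + \<i> * of_real x]
               [a + c, a + d] 1"

end

theory Submission
  imports Defs
begin

lemma poch_nz: "0 < Re z \<Longrightarrow> pochhammer (z::complex) n \<noteq> 0"
  by (auto simp: pochhammer_eq_0_iff)

lemma re_nz: "0 < Re (z::complex) \<Longrightarrow> z \<noteq> 0" by auto

lemma poch_shift1: "(x::complex) * pochhammer (x+1) j = pochhammer x j * (x + of_nat j)"
  by (metis pochhammer_Suc pochhammer_rec)

lemma poch_negk: "- of_nat (Suc k) * pochhammer (- of_nat k :: complex) j
   = pochhammer (- of_nat (Suc k)) j * (of_nat j - of_nat (Suc k))"
proof -
  have "pochhammer (- of_nat (Suc k) :: complex) (Suc j) = - of_nat (Suc k) * pochhammer (- of_nat (Suc k) + 1) j"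
    by (rule pochhammer_rec)
  moreover have "- of_nat (Suc k) + 1 = (- of_nat k :: complex)" by simp
  ultimately show ?thesis by (simp add: pochhammer_Suc algebra_simps)
qed

lemma poch_double: "pochhammer (x::complex) (2*Suc j) = pochhammer x (2*j) * (x + 2*of_nat j) * (x + 2*of_nat j + 1)"
proof -
  have "2 * Suc j = Suc (Suc (2*j))" by simp
  then show ?thesis by (simp add: pochhammer_Suc algebra_simps)
qed

lemma poch_lamrel: "((x::complex) + of_nat j) * pochhammer (x + of_nat (Suc j)) (Suc j)
   = pochhammer (x + of_nat j) j * (x + 2*of_nat j) * (x + 2*of_nat j + 1)"
proof -
  have "pochhammer (x + of_nat j) (Suc (Suc j)) = (x + of_nat j) * pochhammer (x + of_nat j + 1) (Suc j)"
    by (rule pochhammer_rec)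
  moreover have "pochhammer (x + of_nat j) (Suc (Suc j)) = pochhammer (x + of_nat j) j * (x + 2*of_nat j) * (x + 2*of_nat j + 1)"
    by (simp add: pochhammer_Suc algebra_simps)
  ultimately show ?thesis by (simp add: add_ac)
qed

lemma aux_e4:
  fixes J K L c s C A1 A2 A3 A5 A6 A7 F E :: complex
  assumes "J+1 \<noteq> 0" "s+J \<noteq> 0" "L+2*J+2 \<noteq> 0" "K+1 \<noteq> 0" "L+2*J \<noteq> 0" "L+2*J+1 \<noteq> 0" "L+J \<noteq> 0" "C+J \<noteq> 0"
    "A5 \<noteq> 0" "A6 \<noteq> 0" "A7 \<noteq> 0" "F \<noteq> 0"
  shows "- (J+1) * (s + J) / (L + 2*J+2) *
        ((-E) * (A1 * (- (K+1) + J)) / (K+1) * (A2 * (L + 2*J + 1) * (L + 2*J + 2))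
          * (A3 * (c + J)) / ((F * (J+1)) * (A5 * (s + J)) * 
          (A6 * (L + 2*J) * (L + 2*J + 1) / (L + J)) * (A7 * (C + J))))
   = E * A1 * A2 * A3 / (F * A5 * A6 * A7) * (J - (K+1)) * (c + J) * (L + J) / ((K+1) * (L + 2*J) * (C + J))"
  using assms apply (simp add: divide_simps) by algebra
lemma aux_cancel: "x \<noteq> 0 \<Longrightarrow> y \<noteq> 0 \<Longrightarrow> (S::complex) = (x/y * S) * (y/x)"
  by (simp add: field_simps)

lemma aux_fin:
  fixes J K c s X :: complex
  assumes "K+1 \<noteq> 0" "c+s-1+2*J \<noteq> 0" "c+s+K+J \<noteq> 0"
  shows "X*(s+K)/(c+s+K+J) - X*((K+1)-J)/(K+1) = X*(J-(K+1))*(c+J)*(c+s-1+J)/((K+1)*(c+s-1+2*J)*(c+s+K+J)) - (-X*J*(s+J-1)/((c+s-1+2*J)*(K+1)))"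
  using assms apply (simp add: divide_simps) by algebra

definition Wt :: "complex \<Rightarrow> complex \<Rightarrow> nat \<Rightarrow> nat \<Rightarrow> complex" where
  "Wt c s k j = (-1)^j * pochhammer (- of_nat k) j * pochhammer (c+s) (2*j) * pochhammer c j /
     (fact j * pochhammer s j * pochhammer (c+s-1+of_nat j) j * pochhammer (c+s+of_nat k) j)"

definition gg :: "complex \<Rightarrow> complex \<Rightarrow> nat \<Rightarrow> nat \<Rightarrow> complex" where
  "gg c s k j = - of_nat j * (s + of_nat j - 1) / (c+s-1+2*of_nat j) *
     ((-1)^j * pochhammer (- of_nat (Suc k)) j / of_nat (Suc k) * pochhammer (c+s) (2*j) * pochhammer c j /
     (fact j * pochhammer s j * pochhammer (c+s-1+of_nat j) j * pochhammer (c+s+of_nat k) j))"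

lemma wz_step:
  assumes c: "Re c > 0" and s: "Re s > 0"
  shows "(s + of_nat k)/(c+s+of_nat k) * Wt c s (Suc k) j - Wt c s k j = gg c s k (Suc j) - gg c s k j"
proof -
  define A1 where "A1 = pochhammer (- of_nat (Suc k) :: complex) j"
  define A2 where "A2 = pochhammer (c+s) (2*j)"
  define A3 where "A3 = pochhammer c j"
  define A5 where "A5 = pochhammer s j"
  define A6 where "A6 = pochhammer (c+s-1+of_nat j) j"
  define A7 where "A7 = pochhammer (c+s+of_nat k) j"
  define L where "L = c+s-1"
  have nzf: "(fact j :: complex) \<noteq> 0" by simp
  have nz5: "A5 \<noteq> 0" unfolding A5_def using s by (rule poch_nz)
  have nz3: "A3 \<noteq> 0" unfolding A3_def using c by (rule poch_nz)
  have nz7: "A7 \<noteq> 0" unfolding A7_def using c s by (intro poch_nz) simp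
  have nzk: "c+s+of_nat k \<noteq> 0" using c s by (intro re_nz) simp
  have nzsk: "s+of_nat k \<noteq> 0" using s by (intro re_nz) simp
  have nzL2: "L + 2*of_nat j + 2 \<noteq> 0" unfolding L_def using c s by (intro re_nz) simp
  have nzC: "c+s+of_nat k + of_nat j \<noteq> 0" using c s by (intro re_nz) simp
  define X where "X = (-1)^j * A1 * A2 * A3 / (fact j * A5 * A6 * A7)"
  have nz6: "A6 \<noteq> 0"
  proof (cases j)
    case 0 then show ?thesis by (simp add: A6_def)
  next
    case (Suc i) then show ?thesis unfolding A6_def using c s by (intro poch_nz) simp
  qed
  have e1: "(s + of_nat k)/(c+s+of_nat k) * Wt c s (Suc k) j = X * (s + of_nat k)/(c+s+of_nat k + of_nat j)"
  proof -
    have "(c+s+of_nat k) * pochhammer (c+s+of_nat k + 1) j = A7 * (c+s+of_nat k + of_nat j)"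
      unfolding A7_def by (rule poch_shift1)
    then have "pochhammer (c+s+of_nat (Suc k)) j = A7 * (c+s+of_nat k + of_nat j) / (c+s+of_nat k)"
      using nzk by (simp add: field_simps add_ac)
    then show ?thesis unfolding Wt_def X_def A1_def[symmetric] A2_def[symmetric] A3_def[symmetric] A5_def[symmetric] A6_def[symmetric]
      using nzk nzC nz5 nz6 nz7 by (simp add: field_simps)
  qed
  have e2: "Wt c s k j = X * (of_nat (Suc k) - of_nat j) / of_nat (Suc k)"
  proof -
    have h: "pochhammer (- of_nat k) j = A1 * (of_nat (Suc k) - of_nat j) / of_nat (Suc k)"
      using poch_negk[of k j] unfolding A1_def by (simp add: field_simps del: of_nat_Suc)
    show ?thesis unfolding Wt_def h X_def A1_def[symmetric] A2_def[symmetric] A3_def[symmetric] A5_def[symmetric] A6_def[symmetric] A7_def[symmetric]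
      using nz5 nz6 nz7 by (simp add: field_simps del: of_nat_Suc)
  qed
  have e3: "gg c s k j = - X * of_nat j * (s + of_nat j - 1) / ((L + 2*of_nat j) * of_nat (Suc k))"
    unfolding gg_def X_def A1_def[symmetric] A2_def[symmetric] A3_def[symmetric] A5_def[symmetric] A6_def[symmetric] A7_def[symmetric] L_def
    by (simp add: divide_inverse inverse_mult_distrib mult_ac del: of_nat_Suc)
  show ?thesis
  proof (cases j)
    case 0
    have nzs: "s \<noteq> 0" "c+s \<noteq> 0" "c+s+1 \<noteq> 0" "1 + of_nat k \<noteq> (0::complex)" using c s by (auto intro!: re_nz)
    have g1: "gg c s k (Suc 0) = - c/(c+s+of_nat k)"
      unfolding gg_def using nzs nzk apply (simp add: numeral_2_eq_2 pochhammer_Suc) apply (subst frac_eq_eq) apply (simp_all add: add_ac) done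
    have "Wt c s (Suc k) 0 = 1" "Wt c s k 0 = 1" "gg c s k 0 = 0" by (simp_all add: Wt_def gg_def)
    with 0 g1 show ?thesis using nzk by (simp add: field_simps)
  next
    case (Suc i)
    have nzLj: "L + of_nat j \<noteq> 0" unfolding L_def using c s Suc by (intro re_nz) simp
    have nzL2j: "L + 2*of_nat j \<noteq> 0" unfolding L_def using c s Suc by (intro re_nz) simp
    have r1: "pochhammer (- of_nat (Suc k)) (Suc j) = A1 * (- of_nat (Suc k) + of_nat j)"
      unfolding A1_def by (simp add: pochhammer_Suc)
    have r2: "pochhammer (c+s) (2*Suc j) = A2 * (L + 2*of_nat j + 1) * (L + 2*of_nat j + 2)"
      unfolding A2_def L_def poch_double by (simp add: algebra_simps)
    have r3: "pochhammer c (Suc j) = A3 * (c + of_nat j)" unfolding A3_def by (simp add: pochhammer_Suc)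
    have r5: "pochhammer s (Suc j) = A5 * (s + of_nat j)" unfolding A5_def by (simp add: pochhammer_Suc)
    have r7: "pochhammer (c+s+of_nat k) (Suc j) = A7 * (c+s+of_nat k + of_nat j)" unfolding A7_def by (simp add: pochhammer_Suc)
    have r6: "pochhammer (L+of_nat (Suc j)) (Suc j) = A6 * (L + 2*of_nat j) * (L + 2*of_nat j + 1) / (L + of_nat j)"
    proof -
      have "(L + of_nat j) * pochhammer (L + of_nat (Suc j)) (Suc j) = A6 * (L + 2*of_nat j) * (L + 2*of_nat j + 1)"
        unfolding A6_def L_def by (rule poch_lamrel)
      then show ?thesis using nzLj by (simp add: field_simps)
    qed
    have nzsj: "s + of_nat j \<noteq> 0" "L + 2*of_nat j + 1 \<noteq> 0" "of_nat j + 1 \<noteq> (0::complex)"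
        "of_nat k + 1 \<noteq> (0::complex)"
        using c s nzL2 unfolding L_def by (auto intro!: re_nz simp: algebra_simps)
    have "gg c s k (Suc j) = - (of_nat j+1) * (s + of_nat j) / (L + 2*of_nat j+2) *
        ((-((-1)^j)) * (A1 * (- (of_nat k+1) + of_nat j)) / (of_nat k+1) * (A2 * (L + 2*of_nat j + 1) * (L + 2*of_nat j + 2))
          * (A3 * (c + of_nat j)) / ((fact j * (of_nat j+1)) * (A5 * (s + of_nat j)) * 
          (A6 * (L + 2*of_nat j) * (L + 2*of_nat j + 1) / (L + of_nat j)) * (A7 * (c+s+of_nat k + of_nat j))))"
      unfolding gg_def L_def[symmetric] r1 r2 r3 r5 r6 r7 fact_Suc by (simp add: mult.commute add_ac)
    also have "\<dots> = X * (of_nat j - (of_nat k+1)) * (c + of_nat j) * (L + of_nat j) / ((of_nat k+1) * (L + 2*of_nat j) * (c+s+of_nat k + of_nat j))"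
      unfolding X_def using nzLj nzL2j nzL2 nzC nz5 nz6 nz7 nzsj by (intro aux_e4) simp_all
    finally have e4: "gg c s k (Suc j) = X * (of_nat j - (of_nat k+1)) * (c + of_nat j) * (L + of_nat j) / ((of_nat k+1) * (L + 2*of_nat j) * (c+s+of_nat k + of_nat j))" .
    have e2': "Wt c s k j = X * ((of_nat k + 1) - of_nat j) / (of_nat k + 1)" using e2 by (simp add: add.commute)
    have e3': "gg c s k j = - X * of_nat j * (s + of_nat j - 1) / ((L + 2*of_nat j) * (of_nat k + 1))" using e3 by (simp add: add.commute)
    show ?thesis unfolding e1 e2' e3' e4 L_def
      using nzsj nzL2j nzC unfolding L_def by (intro aux_fin) (simp_all add: add_ac)
  qed
qed

lemma bailey:
  assumes c: "Re c > 0" and s: "Re s > 0"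
  shows "(\<Sum>j\<le>k. Wt c s k j) = pochhammer (c+s) k / pochhammer s k"
proof (induction k)
  case 0
  then show ?case by (simp add: Wt_def)
next
  case (Suc k)
  have nzk: "c+s+of_nat k \<noteq> 0" using c s by (intro re_nz) simp
  have nzsk: "s+of_nat k \<noteq> 0" using s by (intro re_nz) simp
  have nzp: "pochhammer s k \<noteq> 0" using s by (rule poch_nz)
  have tel: "(\<Sum>j<Suc (Suc k). gg c s k (Suc j) - gg c s k j) = gg c s k (Suc (Suc k)) - gg c s k 0"
    by (rule sum_lessThan_telescope)
  have g0: "gg c s k 0 = 0" by (simp add: gg_def)
  have g1: "gg c s k (Suc (Suc k)) = 0"
    by (simp add: gg_def pochhammer_of_nat_eq_0_lemma del: of_nat_Suc)
  have w0: "Wt c s k (Suc k) = 0"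
    by (simp add: Wt_def pochhammer_of_nat_eq_0_lemma)
  have "(\<Sum>j<Suc (Suc k). (s + of_nat k)/(c+s+of_nat k) * Wt c s (Suc k) j - Wt c s k j) = 0"
    using tel g0 g1 wz_step[OF c s] by simp
  then have "(s + of_nat k)/(c+s+of_nat k) * (\<Sum>j\<le>Suc k. Wt c s (Suc k) j) - (\<Sum>j\<le>Suc k. Wt c s k j) = 0"
    by (simp only: sum_subtractf sum_distrib_left lessThan_Suc_atMost)
  then have "(s + of_nat k)/(c+s+of_nat k) * (\<Sum>j\<le>Suc k. Wt c s (Suc k) j) = (\<Sum>j\<le>Suc k. Wt c s k j)"
    by simp
  also have "\<dots> = (\<Sum>j\<le>k. Wt c s k j)" using w0 by simp
  also have "\<dots> = pochhammer (c+s) k / pochhammer s k" by (rule Suc.IH)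
  finally have h: "(s + of_nat k)/(c+s+of_nat k) * (\<Sum>j\<le>Suc k. Wt c s (Suc k) j) = pochhammer (c+s) k / pochhammer s k" .
  have "(\<Sum>j\<le>Suc k. Wt c s (Suc k) j) = ((s + of_nat k)/(c+s+of_nat k) * (\<Sum>j\<le>Suc k. Wt c s (Suc k) j)) * ((c+s+of_nat k)/(s + of_nat k))"
    using nzsk nzk by (rule aux_cancel)
  then have "(\<Sum>j\<le>Suc k. Wt c s (Suc k) j) = pochhammer (c+s) k / pochhammer s k * ((c+s+of_nat k)/(s + of_nat k))"
    unfolding h .
  then show ?case by (simp add: pochhammer_Suc divide_inverse inverse_mult_distrib mult_ac)
qed


definition piF :: "complex \<Rightarrow> nat \<Rightarrow> nat \<Rightarrow> complex" where
  "piF lam l j = pochhammer (- of_nat j) l * pochhammer (of_nat j + lam) l"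

lemma aux_shift:
  fixes E T A B C2a C2b C3a C3b F Ft S5a S5b X6a X6b X7a X7b :: complex
  assumes "E*E = 1" "F \<noteq> 0" "Ft \<noteq> 0" "S5a \<noteq> 0" "S5b \<noteq> 0" "X6a \<noteq> 0" "X6b \<noteq> 0" "X7a \<noteq> 0" "X7b \<noteq> 0"
  shows "(E*T) * (A*B) * (C2a*C2b) * (C3a*C3b) / (F * (S5a*S5b) * (X6a*X6b) * (X7a*X7b)) * ((E * (F / Ft)) * X6a)
     = A*C2a*C3a/(S5a*X7a) * (T*B*C2b*C3b/(Ft*S5b*X6b*X7b))"
proof -
  have "(E*T) * (A*B) * (C2a*C2b) * (C3a*C3b) / (F * (S5a*S5b) * (X6a*X6b) * (X7a*X7b)) * ((E * (F / Ft)) * X6a)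
      = (E*E) * (T * (A*B) * (C2a*C2b) * (C3a*C3b) / (F * (S5a*S5b) * (X6a*X6b) * (X7a*X7b)) * ((F / Ft) * X6a))"
    by (simp add: divide_inverse mult_ac)
  also have "\<dots> = A*C2a*C3a/(S5a*X7a) * (T*B*C2b*C3b/(Ft*S5b*X6b*X7b))"
    using assms by (simp add: field_simps)
  finally show ?thesis .
qed

lemma poch_negfact: "pochhammer (- of_nat (l+t) :: complex) l = (-1)^l * (fact (l+t) / fact t)"
proof -
  have "pochhammer (- of_nat (l+t) :: complex) l = (-1)^l * pochhammer (of_nat (l+t) - of_nat l + 1) l"
    by (rule pochhammer_minus)
  moreover have "(of_nat (l+t) - of_nat l + 1 :: complex) = of_nat t + 1" by simp
  moreover have "fact (t+l) = (fact t :: complex) * pochhammer (of_nat t + 1) l"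
    using pochhammer_product'[of "1::complex" t l] by (simp add: pochhammer_fact add.commute)
  ultimately show ?thesis by (simp add: add.commute)
qed

lemma Wt_shift:
  assumes c: "Re c > 0" and s: "Re s > 0"
  shows "Wt c s (l+n) (l+t) * piF (c+s-1) l (l+t)
     = pochhammer (- of_nat (l+n)) l * pochhammer (c+s) (2*l) * pochhammer c l / (pochhammer s l * pochhammer (c+s+of_nat (l+n)) l)
       * Wt (c+of_nat l) (s+of_nat l) n t"
proof -
  have f1: "pochhammer (- of_nat (l+n)) (l+t) = pochhammer (- of_nat (l+n)) l * pochhammer (- of_nat n :: complex) t"
    using pochhammer_product'[of "- of_nat (l+n) :: complex" l t] by simp
  have f2: "pochhammer (c+s) (2*(l+t)) = pochhammer (c+s) (2*l) * pochhammer (c + of_nat l + (s + of_nat l)) (2*t)"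
    using pochhammer_product'[of "c+s" "2*l" "2*t"] by (simp add: algebra_simps)
  have f3: "pochhammer c (l+t) = pochhammer c l * pochhammer (c + of_nat l) t"
    by (rule pochhammer_product')
  have f5: "pochhammer s (l+t) = pochhammer s l * pochhammer (s + of_nat l) t"
    by (rule pochhammer_product')
  have f6: "pochhammer (c+s-1+of_nat (l+t)) (l+t) = pochhammer (of_nat (l+t) + (c+s-1)) l * pochhammer (c + of_nat l + (s + of_nat l) - 1 + of_nat t) t"
    using pochhammer_product'[of "c+s-1+of_nat (l+t)" l t] by (simp add: algebra_simps)
  have f7: "pochhammer (c+s+of_nat (l+n)) (l+t) = pochhammer (c+s+of_nat (l+n)) l * pochhammer (c + of_nat l + (s + of_nat l) + of_nat n) t"
    using pochhammer_product'[of "c+s+of_nat (l+n)" l t] by (simp add: algebra_simps)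
  have nz6: "pochhammer (of_nat (l+t) + (c+s-1)) l \<noteq> 0"
  proof (cases l)
    case 0 then show ?thesis by simp
  next
    case (Suc i) then show ?thesis using c s by (intro poch_nz) simp
  qed
  have nz6b: "pochhammer (c + of_nat l + (s + of_nat l) - 1 + of_nat t) t \<noteq> 0"
  proof (cases t)
    case 0 then show ?thesis by simp
  next
    case (Suc i) then show ?thesis using c s by (intro poch_nz) simp
  qed
  have nz: "pochhammer s l \<noteq> 0" "pochhammer (s + of_nat l) t \<noteq> 0" "pochhammer (c+s+of_nat (l+n)) l \<noteq> 0"
     "pochhammer (c + of_nat l + (s + of_nat l) + of_nat n) t \<noteq> 0"
    using c s by (auto intro!: poch_nz)
  have E: "((-1::complex)^l) * ((-1)^l) = 1" by (simp add: power_add[symmetric])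
  have "Wt c s (l+n) (l+t) * piF (c+s-1) l (l+t) =
     (((-1)^l) * ((-1)^t)) * (pochhammer (- of_nat (l+n)) l * pochhammer (- of_nat n :: complex) t)
     * (pochhammer (c+s) (2*l) * pochhammer (c + of_nat l + (s + of_nat l)) (2*t))
     * (pochhammer c l * pochhammer (c + of_nat l) t)
     / (fact (l+t) * (pochhammer s l * pochhammer (s + of_nat l) t)
        * (pochhammer (of_nat (l+t) + (c+s-1)) l * pochhammer (c + of_nat l + (s + of_nat l) - 1 + of_nat t) t)
        * (pochhammer (c+s+of_nat (l+n)) l * pochhammer (c + of_nat l + (s + of_nat l) + of_nat n) t))
     * ((((-1)^l) * (fact (l+t) / fact t)) * pochhammer (of_nat (l+t) + (c+s-1)) l)"
    unfolding Wt_def piF_def f1 f3 f5 f7 poch_negfact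
    by (simp only: f2 f6 distrib_left[symmetric] power_add)
  also have "\<dots> = pochhammer (- of_nat (l+n)) l * pochhammer (c+s) (2*l) * pochhammer c l / (pochhammer s l * pochhammer (c+s+of_nat (l+n)) l)
       * Wt (c+of_nat l) (s+of_nat l) n t"
    unfolding Wt_def using E nz nz6 nz6b by (intro aux_shift) simp_all
  finally show ?thesis .
qed


lemma aux_G0:
  fixes A C2 C3 S X B Q Y :: complex
  assumes "C2*B = Y*X" "X \<noteq> 0" "S \<noteq> 0" "Q \<noteq> 0"
  shows "A*C2*C3/(S*X)*(B/Q) = A*C3*Y/(S*Q)"
proof -
  have "A*C2*C3/(S*X)*(B/Q) = A*C3*(C2*B)/(S*Q*X)" by (simp add: field_simps)
  also have "\<dots> = A*C3*Y/(S*Q)" using assms by (simp add: field_simps)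
  finally show ?thesis .
qed

lemma G0:
  assumes c: "Re c > 0" and s: "Re s > 0"
  shows "(\<Sum>j\<le>k. Wt c s k j * piF (c+s-1) l j) = pochhammer (- of_nat k) l * pochhammer c l * pochhammer (c+s) k / pochhammer s k"
proof (cases "l \<le> k")
  case False
  then have "\<And>j. j \<le> k \<Longrightarrow> piF (c+s-1) l j = 0"
    by (simp add: piF_def pochhammer_of_nat_eq_0_lemma)
  moreover have "pochhammer (- of_nat k :: complex) l = 0" using False by (simp add: pochhammer_of_nat_eq_0_lemma)
  ultimately show ?thesis by simp
next
  case True
  then obtain n where k: "k = l + n" using le_Suc_ex by blast
  define K where "K = pochhammer (- of_nat (l+n)) l * pochhammer (c+s) (2*l) * pochhammer c l / (pochhammer s l * pochhammer (c+s+of_nat (l+n)) l)"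
  have split: "{..l+n} = {..<l} \<union> {l..l+n}" by auto
  have z: "(\<Sum>j<l. Wt c s k j * piF (c+s-1) l j) = 0"
    by (intro sum.neutral) (simp add: piF_def pochhammer_of_nat_eq_0_lemma)
  have "(\<Sum>j\<le>k. Wt c s k j * piF (c+s-1) l j) = (\<Sum>j\<in>{l..l+n}. Wt c s (l+n) j * piF (c+s-1) l j)"
    unfolding k split using z k by (subst sum.union_disjoint) auto
  also have "\<dots> = (\<Sum>t\<in>{0..n}. Wt c s (l+n) (t+l) * piF (c+s-1) l (t+l))"
    using sum.shift_bounds_cl_nat_ivl[of "\<lambda>j. Wt c s (l+n) j * piF (c+s-1) l j" 0 l n] by (simp add: add.commute)
  also have "\<dots> = (\<Sum>t\<le>n. K * Wt (c+of_nat l) (s+of_nat l) n t)"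
  proof -
    have ws: "Wt c s (l+n) (t+l) * piF (c+s-1) l (t+l) = K * Wt (c+of_nat l) (s+of_nat l) n t" for t
      unfolding K_def using Wt_shift[OF c s, of l n t] by (simp only: add.commute)
    show ?thesis unfolding atLeast0AtMost using ws by simp
  qed
  also have "\<dots> = K * (pochhammer (c+of_nat l + (s+of_nat l)) n / pochhammer (s+of_nat l) n)"
    using bailey[of "c+of_nat l" "s+of_nat l" n] c s by (simp add: sum_distrib_left[symmetric])
  also have "\<dots> = pochhammer (- of_nat k) l * pochhammer c l * pochhammer (c+s) k / pochhammer s k"
  proof -
    have "pochhammer (c+s) (2*l) * pochhammer (c+of_nat l + (s+of_nat l)) n = pochhammer (c+s) (l+n) * pochhammer (c+s+of_nat (l+n)) l"
    proof -
      have "pochhammer (c+s) (2*l + n) = pochhammer (c+s) (2*l) * pochhammer (c+of_nat l + (s+of_nat l)) n"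
        using pochhammer_product'[of "c+s" "2*l" n] by (simp add: algebra_simps)
      moreover have "pochhammer (c+s) ((l+n) + l) = pochhammer (c+s) (l+n) * pochhammer (c+s+of_nat (l+n)) l"
        by (rule pochhammer_product')
      moreover have "2*l+n = (l+n)+l" by simp
      ultimately show ?thesis by metis
    qed
    note h1 = this
    have h2: "pochhammer s (l+n) = pochhammer s l * pochhammer (s+of_nat l) n" by (rule pochhammer_product')
    have h3: "pochhammer (c+s+of_nat (l+n)) l \<noteq> 0" "pochhammer s l \<noteq> 0" "pochhammer (s+of_nat l) n \<noteq> 0"
      using c s by (auto intro!: poch_nz)
    show ?thesis unfolding K_def k h2 by (rule aux_G0[OF h1 h3])
  qed
  finally show ?thesis .
qed


definition fF :: "complex \<Rightarrow> complex \<Rightarrow> nat \<Rightarrow> nat \<Rightarrow> complex" where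
  "fF c s i j = pochhammer (c + of_nat j) i * pochhammer (1 - s - of_nat j) i"

lemma piF_fF_step:
  "piF (c+s-1) l j * fF c s (Suc i) j =
     ((c + of_nat i) * (1 - s + of_nat i) - of_nat l * (c+s-1+of_nat l)) * (piF (c+s-1) l j * fF c s i j)
     + piF (c+s-1) (Suc l) j * fF c s i j"
proof -
  have h1: "piF (c+s-1) (Suc l) j = piF (c+s-1) l j * ((- of_nat j + of_nat l) * (of_nat j + (c+s-1) + of_nat l))"
    unfolding piF_def by (simp add: pochhammer_Suc mult_ac)
  have h2: "fF c s (Suc i) j = fF c s i j * ((c + of_nat j + of_nat i) * (1 - s - of_nat j + of_nat i))"
    unfolding fF_def by (simp add: pochhammer_Suc mult_ac)
  show ?thesis unfolding h1 h2 by (simp add: algebra_simps)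
qed

lemma aux_H:
  fixes E Pc Pl Pk X Ps D c s I L K :: complex
  assumes "Ps \<noteq> 0" "D \<noteq> 0" "D = s + K - I - 1" and that: "(c+I) * P1 = Pl * (c+I+L)"
  shows "-E * (Pc * (c+I)) * P1 * Pk * X / Ps =
     ((c + I) * (1 - s + I) - L * (c+s-1+L)) * (E * Pc * Pl * Pk * X / (Ps * D))
     + E * Pc * (Pl * (c + I + L)) * (Pk * (- K + L)) * X / (Ps * D)"
proof -
  have "-E * (Pc * (c+I)) * P1 * Pk * X / Ps = -E * Pc * (Pl * (c+I+L)) * Pk * X / Ps"
    using that by (simp add: mult_ac)
  also have "\<dots> = ((c + I) * (1 - s + I) - L * (c+s-1+L)) * (E * Pc * Pl * Pk * X / (Ps * D))
     + E * Pc * (Pl * (c + I + L)) * (Pk * (- K + L)) * X / (Ps * D)"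
    using assms by (simp add: divide_simps) (simp add: algebra_simps)
  finally show ?thesis .
qed

lemma Hsum:
  assumes c: "Re c > 0" and s: "Re s > 0"
  shows "i \<le> k \<Longrightarrow> (\<Sum>j\<le>k. Wt c s k j * (piF (c+s-1) l j * fF c s i j)) =
     (-1)^i * pochhammer c i * pochhammer (c + of_nat i) l * pochhammer (- of_nat k) l * pochhammer (c+s) k / pochhammer s (k-i)"
proof (induction i arbitrary: l)
  case 0
  then show ?case using G0[OF c s, of k l] by (simp add: fF_def mult_ac)
next
  case (Suc i)
  have ik: "i \<le> k" using Suc.prems by simp
  define al where "al = (c + of_nat i) * (1 - s + of_nat i) - of_nat l * (c+s-1+of_nat l)"
  have "(\<Sum>j\<le>k. Wt c s k j * (piF (c+s-1) l j * fF c s (Suc i) j))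
     = al * (\<Sum>j\<le>k. Wt c s k j * (piF (c+s-1) l j * fF c s i j)) + (\<Sum>j\<le>k. Wt c s k j * (piF (c+s-1) (Suc l) j * fF c s i j))"
    unfolding piF_fF_step al_def[symmetric] by (simp add: sum_distrib_left sum.distrib algebra_simps)
  also have "\<dots> = al * ((-1)^i * pochhammer c i * pochhammer (c + of_nat i) l * pochhammer (- of_nat k) l * pochhammer (c+s) k / pochhammer s (k-i))
     + (-1)^i * pochhammer c i * pochhammer (c + of_nat i) (Suc l) * pochhammer (- of_nat k) (Suc l) * pochhammer (c+s) k / pochhammer s (k-i)"
    using Suc.IH[OF ik, of l] Suc.IH[OF ik, of "Suc l"] by simp
  also have "\<dots> = (-1)^Suc i * pochhammer c (Suc i) * pochhammer (c + of_nat (Suc i)) l * pochhammer (- of_nat k) l * pochhammer (c+s) k / pochhammer s (k - Suc i)"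
  proof -
    have ki: "k - i = Suc (k - Suc i)" using Suc.prems by simp
    have ps: "pochhammer s (k-i) = pochhammer s (k - Suc i) * (s + of_nat (k - Suc i))"
      unfolding ki by (simp add: pochhammer_Suc)
    have D: "s + of_nat (k - Suc i) = s + of_nat k - of_nat i - 1" using Suc.prems by (simp add: of_nat_diff)
    have nz: "pochhammer s (k - Suc i) \<noteq> 0" "s + of_nat (k - Suc i) \<noteq> 0"
      using s by (rule poch_nz) (use s in \<open>intro re_nz, simp\<close>)
    have sh: "(c + of_nat i) * pochhammer (c + of_nat i + 1) l = pochhammer (c + of_nat i) l * (c + of_nat i + of_nat l)"
      by (rule poch_shift1)
    have "-((-1)^i) * (pochhammer c i * (c + of_nat i)) * pochhammer (c + of_nat i + 1) l * pochhammer (- of_nat k) l * pochhammer (c+s) k / pochhammer s (k - Suc i) =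
     al * ((-1)^i * pochhammer c i * pochhammer (c + of_nat i) l * pochhammer (- of_nat k) l * pochhammer (c+s) k / (pochhammer s (k - Suc i) * (s + of_nat (k - Suc i))))
     + (-1)^i * pochhammer c i * (pochhammer (c + of_nat i) l * (c + of_nat i + of_nat l)) * (pochhammer (- of_nat k) l * (- of_nat k + of_nat l)) * pochhammer (c+s) k / (pochhammer s (k - Suc i) * (s + of_nat (k - Suc i)))"
      unfolding al_def by (rule aux_H[OF nz D sh])
    then show ?thesis unfolding ps by (simp add: pochhammer_Suc add.assoc del: of_nat_Suc) (simp add: algebra_simps)?
  qed
  finally show ?case .
qed


lemma poch_neg_binom: "pochhammer (- of_nat m :: complex) l = (-1)^l * of_nat (m choose l) * fact l"
proof -
  have e: "((-1::complex)^l * (-1)^l) = 1" by (simp add: power_mult_distrib[symmetric])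
  have "(-1)^l * of_nat (m choose l) * fact l = ((-1::complex)^l * (-1)^l) * pochhammer (- of_nat m :: complex) l"
    unfolding binomial_gbinomial gbinomial_pochhammer by simp
  then show ?thesis unfolding e by simp
qed

lemma poch_refl: "pochhammer (x::complex) k = (-1)^k * pochhammer (1 - x - of_nat k) k"
proof -
  have "pochhammer (- (- x)) k = (-1)^k * pochhammer (- x - of_nat k + 1) k" by (rule pochhammer_minus)
  then show ?thesis by (simp add: algebra_simps)
qed

lemma chu:
  assumes nz: "pochhammer (c::complex) m \<noteq> 0"
  shows "(\<Sum>l\<le>m. pochhammer (- of_nat m) l * pochhammer b l / (pochhammer c l * fact l)) = pochhammer (c-b) m / pochhammer c m"
proof -
  have "(\<Sum>l\<le>m. pochhammer (- of_nat m) l * pochhammer b l / (pochhammer c l * fact l))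
     = (\<Sum>l\<le>m. (-1)^m * (of_nat (m choose l) * pochhammer b l * pochhammer (1 - c - of_nat m) (m-l))) / pochhammer c m"
    unfolding sum_divide_distrib
  proof (intro sum.cong refl)
    fix l assume "l \<in> {..m}"
    then have lm: "l \<le> m" by simp
    have nzl: "pochhammer c l \<noteq> 0" using nz lm by (rule pochhammer_neq_0_mono)
    have pm: "pochhammer c m = pochhammer c l * pochhammer (c + of_nat l) (m-l)"
      using lm by (rule pochhammer_product)
    have pr: "pochhammer (c + of_nat l) (m-l) = (-1)^(m-l) * pochhammer (1 - c - of_nat m) (m-l)"
      using poch_refl[of "c + of_nat l" "m-l"] lm by (simp add: of_nat_diff algebra_simps)
    have sg: "(-1::complex)^l * (-1)^(m-l) = (-1)^m" using lm by (simp add: power_add[symmetric])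
    have "pochhammer (- of_nat m) l * pochhammer b l / (pochhammer c l * fact l)
        = (-1)^l * of_nat (m choose l) * pochhammer b l * pochhammer (c + of_nat l) (m-l) / pochhammer c m"
      unfolding poch_neg_binom pm using nzl nz pm by (simp add: field_simps)
    also have "\<dots> = ((-1)^l * (-1)^(m-l)) * (of_nat (m choose l) * pochhammer b l * pochhammer (1 - c - of_nat m) (m-l)) / pochhammer c m"
      unfolding pr by (simp add: mult_ac)
    finally show "pochhammer (- of_nat m) l * pochhammer b l / (pochhammer c l * fact l)
        = (-1)^m * (of_nat (m choose l) * pochhammer b l * pochhammer (1 - c - of_nat m) (m-l)) / pochhammer c m"
      unfolding sg .
  qed
  also have "\<dots> = (-1)^m * pochhammer (b + (1 - c - of_nat m)) m / pochhammer c m"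
    unfolding pochhammer_binomial_sum by (simp add: sum_distrib_left)
  also have "\<dots> = pochhammer (c-b) m / pochhammer c m"
    using poch_refl[of "c-b" m] by (simp add: algebra_simps)
  finally show ?thesis .
qed


definition Cc :: "complex \<Rightarrow> complex \<Rightarrow> nat \<Rightarrow> nat \<Rightarrow> complex" where
  "Cc c s i l = of_nat (i choose l) * pochhammer (c + of_nat l) (i-l) * pochhammer (1-s) (i-l)"

lemma aux_CR:
  fixes B0 B1 P1 Ps c s L R :: complex
  assumes "(L+1)*B1 = (R+1)*B0"
  shows "(B0+B1) * (P1 * (c+L+1+R)) * (Ps * (1-s+R)) =
    B1 * P1 * Ps * ((c + (L+R+1)) * (1 - s + (L+R+1)) - (L+1) * (c+s-1+(L+1))) + B0 * ((c+L) * P1) * (Ps * (1-s+R))"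
  using assms by algebra

lemma Cc_rec:
  "Cc c s (Suc i) (Suc l) = Cc c s i (Suc l) * ((c + of_nat i) * (1 - s + of_nat i) - of_nat (Suc l) * (c+s-1+of_nat (Suc l))) + Cc c s i l"
proof (cases "l < i")
  case True
  then obtain r where i: "i = Suc (l + r)" using less_imp_Suc_add by blast
  have b: "of_nat (Suc l) * (of_nat (i choose Suc l) :: complex) = of_nat (Suc r) * of_nat (i choose l)"
    unfolding i using Suc_times_binomial_add[of l r] by (metis of_nat_mult)
  have p1: "pochhammer (c + of_nat (Suc l)) (Suc r) = pochhammer (c + of_nat (Suc l)) r * (c + of_nat l + 1 + of_nat r)"
    by (simp add: pochhammer_Suc algebra_simps)
  have p2: "pochhammer (c + of_nat l) (Suc r) = (c + of_nat l) * pochhammer (c + of_nat (Suc l)) r"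
    by (simp add: pochhammer_rec add_ac)
  have p3: "pochhammer (1-s) (Suc r) = pochhammer (1-s) r * (1 - s + of_nat r)"
    by (simp add: pochhammer_Suc)
  have d1: "Suc i - Suc l = Suc r" "i - Suc l = r" "i - l = Suc r" using i by auto
  have ci: "(of_nat i :: complex) = of_nat l + of_nat r + 1" using i by simp
  show ?thesis unfolding Cc_def d1 binomial_Suc_Suc of_nat_add p1 p2 p3 ci
    using aux_CR[of "of_nat l" "of_nat (i choose Suc l)" "of_nat r" "of_nat (i choose l)" "pochhammer (c + of_nat (Suc l)) r" c "pochhammer (1-s) r" s] b
    by (simp add: algebra_simps)
next
  case False
  then show ?thesis
  proof (cases "l = i")
    case True then show ?thesis by (simp add: Cc_def)
  next
    case False
    with \<open>\<not> l < i\<close> have "i < l" by simp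
    then show ?thesis by (simp add: Cc_def)
  qed
qed

lemma piF_mult:
  "(c + of_nat j + of_nat i) * (1 - s - of_nat j + of_nat i) * piF (c+s-1) l j =
     ((c + of_nat i) * (1 - s + of_nat i) - of_nat l * (c+s-1+of_nat l)) * piF (c+s-1) l j + piF (c+s-1) (Suc l) j"
proof -
  have h1: "piF (c+s-1) (Suc l) j = piF (c+s-1) l j * ((- of_nat j + of_nat l) * (of_nat j + (c+s-1) + of_nat l))"
    unfolding piF_def by (simp add: pochhammer_Suc mult_ac)
  show ?thesis unfolding h1 by (simp add: algebra_simps)
qed

lemma conn: "fF c s i j = (\<Sum>l\<le>i. Cc c s i l * piF (c+s-1) l j)"
proof (induction i)
  case 0
  then show ?case by (simp add: fF_def Cc_def piF_def)
next
  case (Suc i)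
  define ga where "ga = (\<lambda>l. (c + of_nat i) * (1 - s + of_nat i) - of_nat l * (c+s-1+of_nat l))"
  have "fF c s (Suc i) j = (c + of_nat j + of_nat i) * (1 - s - of_nat j + of_nat i) * fF c s i j"
    unfolding fF_def by (simp add: pochhammer_Suc mult_ac)
  also have "\<dots> = (\<Sum>l\<le>i. Cc c s i l * (ga l * piF (c+s-1) l j + piF (c+s-1) (Suc l) j))"
    unfolding Suc.IH sum_distrib_left
  proof (intro sum.cong refl)
    fix l
    have "(c + of_nat j + of_nat i) * (1 - s - of_nat j + of_nat i) * (Cc c s i l * piF (c+s-1) l j)
       = Cc c s i l * ((c + of_nat j + of_nat i) * (1 - s - of_nat j + of_nat i) * piF (c+s-1) l j)"
      by (simp only: mult_ac)
    also have "\<dots> = Cc c s i l * (ga l * piF (c+s-1) l j + piF (c+s-1) (Suc l) j)"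
      unfolding piF_mult ga_def ..
    finally show "(c + of_nat j + of_nat i) * (1 - s - of_nat j + of_nat i) * (Cc c s i l * piF (c+s-1) l j)
       = Cc c s i l * (ga l * piF (c+s-1) l j + piF (c+s-1) (Suc l) j)" .
  qed
  also have "\<dots> = (\<Sum>l\<le>i. Cc c s i l * ga l * piF (c+s-1) l j) + (\<Sum>l\<le>i. Cc c s i l * piF (c+s-1) (Suc l) j)"
    by (simp add: sum.distrib algebra_simps)
  also have "(\<Sum>l\<le>i. Cc c s i l * ga l * piF (c+s-1) l j) = (\<Sum>l\<le>Suc i. Cc c s i l * ga l * piF (c+s-1) l j)"
    by (simp add: Cc_def)
  also have "\<dots> = Cc c s i 0 * ga 0 * piF (c+s-1) 0 j + (\<Sum>l\<le>i. Cc c s i (Suc l) * ga (Suc l) * piF (c+s-1) (Suc l) j)"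
    by (rule sum.atMost_Suc_shift)
  also have "Cc c s i 0 * ga 0 * piF (c+s-1) 0 j + (\<Sum>l\<le>i. Cc c s i (Suc l) * ga (Suc l) * piF (c+s-1) (Suc l) j)
      + (\<Sum>l\<le>i. Cc c s i l * piF (c+s-1) (Suc l) j)
      = Cc c s (Suc i) 0 * piF (c+s-1) 0 j + (\<Sum>l\<le>i. Cc c s (Suc i) (Suc l) * piF (c+s-1) (Suc l) j)"
  proof -
    have "Cc c s (Suc i) 0 = Cc c s i 0 * ga 0" unfolding Cc_def ga_def by (simp add: pochhammer_Suc algebra_simps)
    moreover have "Cc c s (Suc i) (Suc l) = Cc c s i (Suc l) * ga (Suc l) + Cc c s i l" for l
      unfolding ga_def by (rule Cc_rec)
    ultimately show ?thesis by (simp add: sum.distrib algebra_simps)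
  qed
  also have "\<dots> = (\<Sum>l\<le>Suc i. Cc c s (Suc i) l * piF (c+s-1) l j)"
    by (rule sum.atMost_Suc_shift[symmetric])
  finally show ?case .
qed


definition Qh :: "complex \<Rightarrow> complex \<Rightarrow> nat \<Rightarrow> nat \<Rightarrow> nat \<Rightarrow> complex" where
  "Qh c s k j m = (\<Sum>l\<le>m. piF (c+s-1) l j * pochhammer (- of_nat m) l / (pochhammer c l * pochhammer (- of_nat k) l * fact l))"

lemma poch_negk_nz: "m \<le> k \<Longrightarrow> pochhammer (- of_nat k :: complex) m \<noteq> 0"
  by (simp add: pochhammer_of_nat_eq_0_iff)

lemma poch_1sk_nz:
  assumes s: "Re s > 0" and "m \<le> k"
  shows "pochhammer (1 - s - of_nat k :: complex) m \<noteq> 0"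
proof
  assume "pochhammer (1 - s - of_nat k :: complex) m = 0"
  then obtain r where r: "r < m" "1 - s - of_nat k = - of_nat r" by (auto simp: pochhammer_eq_0_iff)
  then have "s = 1 - of_nat k + of_nat r" by (simp add: algebra_simps)
  then have "Re s = 1 - real k + real r" by simp
  with r assms show False by linarith
qed



lemma aux_Qi:
  fixes a b B C D E F G H I :: complex
  assumes "B \<noteq> 0" "C \<noteq> 0" "E \<noteq> 0" "F \<noteq> 0" "G \<noteq> 0" "H \<noteq> 0" "I \<noteq> 0"
  shows "a*b*(B*C*D)/((E*C)*(F*G)*(B*H*I)) = a/(E*I*F) * (b*D/(G*H))"
  using assms by (simp add: field_simps)

lemma aux_Qi2:
  fixes a b f p y q :: complex
  shows "a/(b*f*p)*(y/q) = a*y/(b*f*(p*q))"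
  by (simp add: divide_inverse inverse_mult_distrib mult_ac)

lemma Qf_inner:
  assumes c: "Re c > 0" and s: "Re s > 0" and lm: "l \<le> m" and mk: "m \<le> k"
  shows "(\<Sum>i\<in>{l..m}. pochhammer (- of_nat m) i * Cc c s i l / (pochhammer c i * pochhammer (1 - s - of_nat k) i * fact i))
    = pochhammer (- of_nat m) l * pochhammer (of_nat l - of_nat k) (m-l) / (pochhammer c l * fact l * pochhammer (1 - s - of_nat k) m)"
proof -
  obtain n where m: "m = l + n" using lm le_Suc_ex by blast
  have nzc: "\<And>i. pochhammer c i \<noteq> 0" using c by (rule poch_nz)
  have nzs: "\<And>i. i \<le> m \<Longrightarrow> pochhammer (1 - s - of_nat k) i \<noteq> 0" using s mk by (intro poch_1sk_nz) auto
  have "(\<Sum>i\<in>{l..m}. pochhammer (- of_nat m) i * Cc c s i l / (pochhammer c i * pochhammer (1 - s - of_nat k) i * fact i))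
     = (\<Sum>t\<in>{0..n}. pochhammer (- of_nat m) (t+l) * Cc c s (t+l) l / (pochhammer c (t+l) * pochhammer (1 - s - of_nat k) (t+l) * fact (t+l)))"
    unfolding m using sum.shift_bounds_cl_nat_ivl[of "\<lambda>i. pochhammer (- of_nat (l+n)) i * Cc c s i l / (pochhammer c i * pochhammer (1 - s - of_nat k) i * fact i)" 0 l n]
    by (simp add: add.commute)
  also have "\<dots> = (\<Sum>t\<le>n. pochhammer (- of_nat m) l / (pochhammer c l * fact l * pochhammer (1 - s - of_nat k) l) *
         (pochhammer (- of_nat n) t * pochhammer (1-s) t / (pochhammer (1 - s - of_nat k + of_nat l) t * fact t)))"
    unfolding atLeast0AtMost
  proof (intro sum.cong refl)
    fix t assume "t \<in> {..n}"
    then have tn: "t \<le> n" by simp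
    have e1: "pochhammer (- of_nat m) (t+l) = pochhammer (- of_nat m) l * pochhammer (- of_nat n :: complex) t"
      unfolding m using pochhammer_product'[of "- of_nat (l+n) :: complex" l t] by (simp add: add.commute)
    have e2: "pochhammer c (t+l) = pochhammer c l * pochhammer (c + of_nat l) t"
      using pochhammer_product'[of c l t] by (simp add: add.commute)
    have e3: "pochhammer (1 - s - of_nat k) (t+l) = pochhammer (1 - s - of_nat k) l * pochhammer (1 - s - of_nat k + of_nat l) t"
      using pochhammer_product'[of "1 - s - of_nat k" l t] by (simp add: add.commute)
    have e4: "Cc c s (t+l) l = of_nat ((t+l) choose l) * pochhammer (c + of_nat l) t * pochhammer (1-s) t"
      unfolding Cc_def by simp
    have e5: "(fact (t+l) :: complex) = of_nat ((t+l) choose l) * fact t * fact l"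
    proof -
      have n: "fact l * fact t * ((t+l) choose l) = (fact (t+l) :: nat)" using binomial_fact_lemma[of l "t+l"] by simp
      have "(fact (t+l)::complex) = of_nat (fact (t+l))" by simp
      also have "\<dots> = of_nat (fact l * fact t * ((t+l) choose l))" by (simp only: n)
      also have "\<dots> = of_nat ((t+l) choose l) * fact t * fact l" by (simp add: mult_ac)
      finally show ?thesis .
    qed
    have nz: "pochhammer (1 - s - of_nat k) l \<noteq> 0" "pochhammer (1 - s - of_nat k + of_nat l) t \<noteq> 0"
      "pochhammer (c + of_nat l) t \<noteq> 0" "of_nat ((t+l) choose l) \<noteq> (0::complex)"
    proof -
      show "pochhammer (1 - s - of_nat k) l \<noteq> 0" using nzs lm by simp
      have "pochhammer (1 - s - of_nat k) (t+l) \<noteq> 0" using nzs tn m by simp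
      then show "pochhammer (1 - s - of_nat k + of_nat l) t \<noteq> 0" unfolding e3 by simp
      show "pochhammer (c + of_nat l) t \<noteq> 0" using c by (intro poch_nz) simp
      show "of_nat ((t+l) choose l) \<noteq> (0::complex)" by simp
    qed
    show "pochhammer (- of_nat m) (t+l) * Cc c s (t+l) l / (pochhammer c (t+l) * pochhammer (1 - s - of_nat k) (t+l) * fact (t+l))
      = pochhammer (- of_nat m) l / (pochhammer c l * fact l * pochhammer (1 - s - of_nat k) l) *
         (pochhammer (- of_nat n) t * pochhammer (1-s) t / (pochhammer (1 - s - of_nat k + of_nat l) t * fact t))"
      unfolding e1 e2 e3 e4 e5 using nz nzc by (intro aux_Qi) auto
  qed
  also have "\<dots> = pochhammer (- of_nat m) l / (pochhammer c l * fact l * pochhammer (1 - s - of_nat k) l) *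
       (pochhammer (1 - s - of_nat k + of_nat l - (1-s)) n / pochhammer (1 - s - of_nat k + of_nat l) n)"
  proof -
    have "pochhammer (1 - s - of_nat k) (l+n) \<noteq> 0" using nzs m by simp
    then have "pochhammer (1 - s - of_nat k + of_nat l) n \<noteq> 0"
      using pochhammer_product'[of "1 - s - of_nat k" l n] by simp
    then have ch: "(\<Sum>t\<le>n. pochhammer (- of_nat n) t * pochhammer (1-s) t / (pochhammer (1 - s - of_nat k + of_nat l) t * fact t))
       = pochhammer (1 - s - of_nat k + of_nat l - (1-s)) n / pochhammer (1 - s - of_nat k + of_nat l) n"
      by (rule chu)
    show ?thesis by (simp only: sum_distrib_left[symmetric] ch)
  qed
  also have "\<dots> = pochhammer (- of_nat m) l * pochhammer (of_nat l - of_nat k) (m-l) / (pochhammer c l * fact l * pochhammer (1 - s - of_nat k) m)"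
  proof -
    have "pochhammer (1 - s - of_nat k) m = pochhammer (1 - s - of_nat k) l * pochhammer (1 - s - of_nat k + of_nat l) n"
      unfolding m by (rule pochhammer_product')
    moreover have "1 - s - of_nat k + of_nat l - (1-s) = (of_nat l - of_nat k :: complex)" by simp
    moreover have "m - l = n" using m by simp
    ultimately show ?thesis by (simp add: aux_Qi2)
  qed
  finally show ?thesis .
qed



lemma Cc_zero: "i < l \<Longrightarrow> Cc c s i l = 0"
  by (simp add: Cc_def)

lemma Qf:
  assumes c: "Re c > 0" and s: "Re s > 0" and mk: "m \<le> k"
  shows "Qh c s k j m = pochhammer (1 - s - of_nat k) m / pochhammer (- of_nat k) m *
     (\<Sum>i\<le>m. pochhammer (- of_nat m) i * fF c s i j / (pochhammer c i * pochhammer (1 - s - of_nat k) i * fact i))"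
proof -
  define D where "D = (\<lambda>i. pochhammer c i * pochhammer (1 - s - of_nat k) i * fact i)"
  have "(\<Sum>i\<le>m. pochhammer (- of_nat m) i * fF c s i j / D i)
      = (\<Sum>i\<le>m. \<Sum>l\<le>m. piF (c+s-1) l j * (pochhammer (- of_nat m) i * Cc c s i l / D i))"
  proof (intro sum.cong refl)
    fix i assume "i \<in> {..m}"
    then have im: "i \<le> m" by simp
    have "fF c s i j = (\<Sum>l\<le>m. Cc c s i l * piF (c+s-1) l j)"
      unfolding conn using im by (intro sum.mono_neutral_left) (auto simp: Cc_zero)
    then show "pochhammer (- of_nat m) i * fF c s i j / D i = (\<Sum>l\<le>m. piF (c+s-1) l j * (pochhammer (- of_nat m) i * Cc c s i l / D i))"
      by (simp add: sum_distrib_left sum_divide_distrib mult_ac)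
  qed
  also have "\<dots> = (\<Sum>l\<le>m. piF (c+s-1) l j * (\<Sum>i\<le>m. pochhammer (- of_nat m) i * Cc c s i l / D i))"
    by (subst sum.swap) (simp add: sum_distrib_left)
  also have "\<dots> = (\<Sum>l\<le>m. piF (c+s-1) l j * (pochhammer (- of_nat m) l * pochhammer (of_nat l - of_nat k) (m-l) / (pochhammer c l * fact l * pochhammer (1 - s - of_nat k) m)))"
  proof (intro sum.cong refl)
    fix l assume "l \<in> {..m}"
    then have lm: "l \<le> m" by simp
    have "(\<Sum>i\<le>m. pochhammer (- of_nat m) i * Cc c s i l / D i) = (\<Sum>i\<in>{l..m}. pochhammer (- of_nat m) i * Cc c s i l / D i)"
      by (rule sum.mono_neutral_right) (auto simp: Cc_zero)
    also have "\<dots> = pochhammer (- of_nat m) l * pochhammer (of_nat l - of_nat k) (m-l) / (pochhammer c l * fact l * pochhammer (1 - s - of_nat k) m)"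
      unfolding D_def by (rule Qf_inner[OF c s lm mk])
    finally show "piF (c+s-1) l j * (\<Sum>i\<le>m. pochhammer (- of_nat m) i * Cc c s i l / D i) = piF (c+s-1) l j * (pochhammer (- of_nat m) l * pochhammer (of_nat l - of_nat k) (m-l) / (pochhammer c l * fact l * pochhammer (1 - s - of_nat k) m))"
      by simp
  qed
  finally have h: "(\<Sum>i\<le>m. pochhammer (- of_nat m) i * fF c s i j / D i) = \<dots>" .
  have nz1: "pochhammer (1 - s - of_nat k) m \<noteq> 0" using s mk by (rule poch_1sk_nz)
  have nz2: "pochhammer (- of_nat k :: complex) m \<noteq> 0" using mk by (rule poch_negk_nz)
  note h' = h[unfolded D_def]
  show ?thesis unfolding h' Qh_def sum_distrib_left
  proof (intro sum.cong refl)
    fix l assume "l \<in> {..m}"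
    then have lm: "l \<le> m" by simp
    have pk: "pochhammer (- of_nat k :: complex) m = pochhammer (- of_nat k) l * pochhammer (of_nat l - of_nat k) (m-l)"
      using pochhammer_product[OF lm, of "- of_nat k :: complex"] by (simp add: algebra_simps)
    have nz3: "pochhammer (- of_nat k :: complex) l \<noteq> 0" "pochhammer (of_nat l - of_nat k :: complex) (m-l) \<noteq> 0"
      using nz2 unfolding pk by auto
    have nz4: "pochhammer c l \<noteq> 0" using c by (rule poch_nz)
    show "piF (c+s-1) l j * pochhammer (- of_nat m) l / (pochhammer c l * pochhammer (- of_nat k) l * fact l) =
      pochhammer (1 - s - of_nat k) m / pochhammer (- of_nat k) m * (piF (c+s-1) l j * (pochhammer (- of_nat m) l * pochhammer (of_nat l - of_nat k) (m-l) / (pochhammer c l * fact l * pochhammer (1 - s - of_nat k) m)))"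
      unfolding pk using nz1 nz3 nz4 by (simp add: field_simps)
  qed
qed


lemma triple_swap:
  fixes w :: "nat \<Rightarrow> complex"
  shows "(\<Sum>j\<in>A. w j * (\<Sum>l\<in>B. x l j) * (\<kappa> * (\<Sum>i\<in>C. y i j))) = \<kappa> * (\<Sum>i\<in>C. \<Sum>l\<in>B. \<Sum>j\<in>A. w j * (x l j * y i j))"
proof -
  have "(\<Sum>j\<in>A. w j * (\<Sum>l\<in>B. x l j) * (\<kappa> * (\<Sum>i\<in>C. y i j))) = (\<Sum>j\<in>A. \<Sum>l\<in>B. \<Sum>i\<in>C. \<kappa> * (w j * (x l j * y i j)))"
    by (simp add: sum_distrib_left sum_distrib_right mult_ac)
  also have "\<dots> = (\<Sum>l\<in>B. \<Sum>j\<in>A. \<Sum>i\<in>C. \<kappa> * (w j * (x l j * y i j)))" by (rule sum.swap)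
  also have "\<dots> = (\<Sum>l\<in>B. \<Sum>i\<in>C. \<Sum>j\<in>A. \<kappa> * (w j * (x l j * y i j)))" by (simp only: sum.swap[of _ A])
  also have "\<dots> = (\<Sum>i\<in>C. \<Sum>l\<in>B. \<Sum>j\<in>A. \<kappa> * (w j * (x l j * y i j)))" by (rule sum.swap)
  also have "\<dots> = \<kappa> * (\<Sum>i\<in>C. \<Sum>l\<in>B. \<Sum>j\<in>A. w j * (x l j * y i j))" by (simp add: sum_distrib_left)
  finally show ?thesis .
qed

lemma sum_negpoch_fact: "(\<Sum>t\<le>n. pochhammer (- of_nat n :: complex) t / fact t) = (if n = 0 then 1 else 0)"
proof -
  have "(\<Sum>t\<le>n. pochhammer (- of_nat n :: complex) t * pochhammer 1 t / (pochhammer 1 t * fact t)) = pochhammer (1-1) n / pochhammer 1 n"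
    by (rule chu) (simp add: pochhammer_fact[symmetric])
  moreover have "pochhammer (1::complex) t \<noteq> 0" for t by (simp add: pochhammer_fact[symmetric])
  ultimately show ?thesis by (cases n) (simp_all add: pochhammer_fact[symmetric] pochhammer_0_left)
qed

lemma delta_sum:
  "(\<Sum>i\<le>m'. pochhammer (- of_nat m' :: complex) i * pochhammer (- of_nat i) m / fact i) = (if m = m' then fact m else 0)"
proof (cases "m \<le> m'")
  case False
  then have "\<And>i. i \<le> m' \<Longrightarrow> pochhammer (- of_nat i :: complex) m = 0" by (simp add: pochhammer_of_nat_eq_0_lemma)
  with False show ?thesis by simp
next
  case True
  then obtain n where m': "m' = m + n" using le_Suc_ex by blast
  have "(\<Sum>i\<le>m'. pochhammer (- of_nat m' :: complex) i * pochhammer (- of_nat i) m / fact i)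
      = (\<Sum>i\<in>{m..m+n}. pochhammer (- of_nat m' :: complex) i * pochhammer (- of_nat i) m / fact i)"
    unfolding m' by (rule sum.mono_neutral_right) (auto simp: pochhammer_of_nat_eq_0_lemma)
  also have "\<dots> = (\<Sum>t\<in>{0..n}. pochhammer (- of_nat m' :: complex) (t+m) * pochhammer (- of_nat (t+m)) m / fact (t+m))"
    using sum.shift_bounds_cl_nat_ivl[of "\<lambda>i. pochhammer (- of_nat m' :: complex) i * pochhammer (- of_nat i) m / fact i" 0 m n]
    by (simp add: add.commute)
  also have "\<dots> = (\<Sum>t\<le>n. (-1)^m * pochhammer (- of_nat m' :: complex) m * (pochhammer (- of_nat n) t / fact t))"
    unfolding atLeast0AtMost
  proof (intro sum.cong refl)
    fix t
    have e1: "pochhammer (- of_nat m' :: complex) (m+t) = pochhammer (- of_nat m') m * pochhammer (- of_nat n) t"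
      unfolding m' using pochhammer_product'[of "- of_nat (m+n) :: complex" m t] by simp
    have e2: "pochhammer (- of_nat (m+t) :: complex) m = (-1)^m * (fact (m+t) / fact t)" by (rule poch_negfact)
    have nz: "(fact (m+t) :: complex) \<noteq> 0" "(fact t :: complex) \<noteq> 0" by simp_all
    show "pochhammer (- of_nat m' :: complex) (t+m) * pochhammer (- of_nat (t+m)) m / fact (t+m)
       = (-1)^m * pochhammer (- of_nat m' :: complex) m * (pochhammer (- of_nat n) t / fact t)"
      using e1 e2 nz by (simp add: add.commute field_simps)
  qed
  also have "\<dots> = (-1)^m * pochhammer (- of_nat m' :: complex) m * (if n = 0 then 1 else 0)"
    by (simp only: sum_distrib_left[symmetric] sum_negpoch_fact)
  also have "\<dots> = (if m = m' then fact m else 0)"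
    using m' by (auto simp: pochhammer_same)
  finally show ?thesis .
qed


lemma refl2:
  assumes "i \<le> k"
  shows "pochhammer (1 - s - of_nat k :: complex) i * pochhammer s (k-i) = (-1)^i * pochhammer s k"
proof -
  have "pochhammer s k = pochhammer s (k-i) * pochhammer (s + of_nat (k-i)) i"
    using pochhammer_product'[of s "k-i" i] assms by simp
  moreover have "pochhammer (1 - s - of_nat k :: complex) i = (-1)^i * pochhammer (s + of_nat (k-i)) i"
    using poch_refl[of "1 - s - of_nat k" i] assms by (simp add: of_nat_diff algebra_simps)
  moreover have "((-1::complex)^i * (-1)^i) = 1" by (simp add: power_mult_distrib[symmetric])
  ultimately show ?thesis by (simp add: mult_ac)
qed

lemma dual:
  assumes c: "Re c > 0" and s: "Re s > 0" and mk: "m \<le> k" and mk': "m' \<le> k"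
  shows "(\<Sum>j\<le>k. Wt c s k j * Qh c s k j m * Qh c s k j m') =
    (if m = m' then pochhammer (1 - s - of_nat k) m * pochhammer (c+s) k * fact m / (pochhammer (- of_nat k) m * pochhammer c m * pochhammer s k) else 0)"
proof -
  define X where "X = pochhammer (c+s) k"
  define kp where "kp = pochhammer (1 - s - of_nat k) m' / pochhammer (- of_nat k) m'"
  define D where "D = (\<lambda>i. pochhammer c i * pochhammer (1 - s - of_nat k) i * fact i)"
  define b where "b = (\<lambda>l. pochhammer (- of_nat m) l / (pochhammer c l * pochhammer (- of_nat k) l * fact l))"
  have Qm: "Qh c s k j m = (\<Sum>l\<le>m. piF (c+s-1) l j * b l)" for j
    unfolding Qh_def b_def by (simp add: mult_ac)
  have Qm': "Qh c s k j m' = kp * (\<Sum>i\<le>m'. pochhammer (- of_nat m') i * fF c s i j / D i)" for j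
    unfolding kp_def D_def by (rule Qf[OF c s mk'])
  have "(\<Sum>j\<le>k. Wt c s k j * Qh c s k j m * Qh c s k j m')
     = kp * (\<Sum>i\<le>m'. \<Sum>l\<le>m. \<Sum>j\<le>k. Wt c s k j * (piF (c+s-1) l j * b l * (pochhammer (- of_nat m') i * fF c s i j / D i)))"
    unfolding Qm Qm' by (rule triple_swap)
  also have "\<dots> = kp * (\<Sum>i\<le>m'. pochhammer (- of_nat m') i / D i * ((-1)^i * pochhammer c i * X / pochhammer s (k-i)) * (pochhammer (- of_nat i) m / pochhammer c m))"
  proof -
    have "(\<Sum>l\<le>m. \<Sum>j\<le>k. Wt c s k j * (piF (c+s-1) l j * b l * (pochhammer (- of_nat m') i * fF c s i j / D i)))
        = pochhammer (- of_nat m') i / D i * ((-1)^i * pochhammer c i * X / pochhammer s (k-i)) * (pochhammer (- of_nat i) m / pochhammer c m)"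
      if im: "i \<le> m'" for i
    proof -
      have ik: "i \<le> k" using im mk' by simp
      have "(\<Sum>l\<le>m. \<Sum>j\<le>k. Wt c s k j * (piF (c+s-1) l j * b l * (pochhammer (- of_nat m') i * fF c s i j / D i)))
         = (\<Sum>l\<le>m. b l * (pochhammer (- of_nat m') i / D i) * (\<Sum>j\<le>k. Wt c s k j * (piF (c+s-1) l j * fF c s i j)))"
        by (simp add: sum_distrib_left mult_ac)
      also have "\<dots> = (\<Sum>l\<le>m. (pochhammer (- of_nat m') i / D i * ((-1)^i * pochhammer c i * X / pochhammer s (k-i))) *
            (pochhammer (- of_nat m) l * pochhammer (c + of_nat i) l / (pochhammer c l * fact l)))"
      proof (intro sum.cong refl)
        fix l assume "l \<in> {..m}"
        then have lk: "l \<le> k" using mk by simp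
        have nzk: "pochhammer (- of_nat k :: complex) l \<noteq> 0" using lk by (rule poch_negk_nz)
        show "b l * (pochhammer (- of_nat m') i / D i) * (\<Sum>j\<le>k. Wt c s k j * (piF (c+s-1) l j * fF c s i j))
          = (pochhammer (- of_nat m') i / D i * ((-1)^i * pochhammer c i * X / pochhammer s (k-i))) *
            (pochhammer (- of_nat m) l * pochhammer (c + of_nat i) l / (pochhammer c l * fact l))"
          unfolding Hsum[OF c s ik] b_def X_def using nzk by (simp add: field_simps)
      qed
      also have "\<dots> = pochhammer (- of_nat m') i / D i * ((-1)^i * pochhammer c i * X / pochhammer s (k-i)) *
          (\<Sum>l\<le>m. pochhammer (- of_nat m) l * pochhammer (c + of_nat i) l / (pochhammer c l * fact l))"
        by (simp add: sum_distrib_left)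
      also have "(\<Sum>l\<le>m. pochhammer (- of_nat m) l * pochhammer (c + of_nat i) l / (pochhammer c l * fact l)) = pochhammer (- of_nat i) m / pochhammer c m"
        using chu[of c m "c + of_nat i"] c by (simp add: poch_nz)
      finally show ?thesis .
    qed
    then show ?thesis by simp
  qed
  also have "\<dots> = kp * (X / (pochhammer c m * pochhammer s k) * (\<Sum>i\<le>m'. pochhammer (- of_nat m') i * pochhammer (- of_nat i) m / fact i))"
  proof -
    have "pochhammer (- of_nat m') i / D i * ((-1)^i * pochhammer c i * X / pochhammer s (k-i)) * (pochhammer (- of_nat i) m / pochhammer c m)
       = X / (pochhammer c m * pochhammer s k) * (pochhammer (- of_nat m') i * pochhammer (- of_nat i) m / fact i)"
      if im: "i \<le> m'" for i
    proof -
      have ik: "i \<le> k" using im mk' by simp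
      have r: "pochhammer (1 - s - of_nat k :: complex) i * pochhammer s (k-i) = (-1)^i * pochhammer s k" by (rule refl2[OF ik])
      have nz: "pochhammer c i \<noteq> 0" "pochhammer (1 - s - of_nat k) i \<noteq> 0" "pochhammer s (k-i) \<noteq> 0" "pochhammer s k \<noteq> 0"
        "pochhammer c m \<noteq> 0"
        using poch_nz[OF c] poch_nz[OF s] poch_1sk_nz[OF s ik] by auto
      have e: "((-1::complex)^i * (-1)^i) = 1" by (simp add: power_mult_distrib[symmetric])
      have "pochhammer s k = (-1)^i * (pochhammer (1 - s - of_nat k :: complex) i * pochhammer s (k-i))"
        unfolding r by (simp add: mult.assoc[symmetric] e)
      then show ?thesis unfolding D_def using nz by (simp add: field_simps)
    qed
    then show ?thesis by (simp add: sum_distrib_left)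
  qed
  also have "\<dots> = (if m = m' then pochhammer (1 - s - of_nat k) m * pochhammer (c+s) k * fact m / (pochhammer (- of_nat k) m * pochhammer c m * pochhammer s k) else 0)"
    unfolding delta_sum kp_def X_def by (auto simp: mult_ac)
  finally show ?thesis .
qed


lemma tri_swap: fixes k :: nat shows "(\<Sum>n\<le>k. \<Sum>m\<in>{n..k}. G n m) = (\<Sum>m\<le>k. \<Sum>n\<le>m. (G n m :: complex))"
proof (induction k)
  case 0
  then show ?case by simp
next
  case (Suc k)
  have "(\<Sum>n\<le>Suc k. \<Sum>m\<in>{n..Suc k}. G n m) = (\<Sum>n\<le>k. \<Sum>m\<in>{n..Suc k}. G n m) + G (Suc k) (Suc k)"
    by simp
  also have "(\<Sum>n\<le>k. \<Sum>m\<in>{n..Suc k}. G n m) = (\<Sum>n\<le>k. (\<Sum>m\<in>{n..k}. G n m) + G n (Suc k))"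
    by (intro sum.cong refl) (simp add: atLeastAtMostSuc_conv add.commute)
  also have "\<dots> = (\<Sum>m\<le>k. \<Sum>n\<le>m. G n m) + (\<Sum>n\<le>k. G n (Suc k))"
    by (simp add: sum.distrib Suc.IH)
  finally show ?case by simp
qed

definition Fh :: "complex \<Rightarrow> complex \<Rightarrow> complex \<Rightarrow> complex \<Rightarrow> nat \<Rightarrow> nat \<Rightarrow> complex" where
  "Fh c s A u j k = (\<Sum>n\<le>k. piF (c+s-1) n j * pochhammer u n / (pochhammer c n * pochhammer A n * fact n))"

lemma binom_coef:
  assumes "n \<le> m" "m \<le> k"
  shows "of_nat ((k-n) choose (m-n)) * pochhammer (- of_nat k :: complex) n = of_nat (k choose m) * pochhammer (- of_nat m) n"
proof -
  have "(k choose m) * (m choose n) = (k choose n) * ((k - n) choose (m - n))" using assms by (rule choose_mult)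
  then have "(of_nat (k choose m) * of_nat (m choose n) :: complex) = of_nat (k choose n) * of_nat ((k - n) choose (m - n))"
    by (metis of_nat_mult)
  then show ?thesis unfolding poch_neg_binom by (simp add: mult_ac)
qed

lemma expand:
  assumes c: "Re c > 0" and A: "Re A > 0"
  shows "pochhammer A k * Fh c s A u j k = (\<Sum>m\<le>k. of_nat (k choose m) * Qh c s k j m * (pochhammer u m * pochhammer (A-u) (k-m)))"
proof -
  define g where "g = (\<lambda>n. piF (c+s-1) n j / (pochhammer c n * fact n))"
  have "pochhammer A k * Fh c s A u j k = (\<Sum>n\<le>k. g n * (pochhammer u n * pochhammer (A + of_nat n) (k-n)))"
    unfolding Fh_def sum_distrib_left
  proof (intro sum.cong refl)
    fix n assume "n \<in> {..k}"
    then have nk: "n \<le> k" by simp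
    have pa: "pochhammer A k = pochhammer A n * pochhammer (A + of_nat n) (k-n)" using nk by (rule pochhammer_product)
    have nz: "pochhammer A n \<noteq> 0" "pochhammer c n \<noteq> 0" using poch_nz[OF A] poch_nz[OF c] by auto
    show "pochhammer A k * (piF (c+s-1) n j * pochhammer u n / (pochhammer c n * pochhammer A n * fact n)) =
        g n * (pochhammer u n * pochhammer (A + of_nat n) (k-n))"
      unfolding pa g_def using nz by (simp add: field_simps)
  qed
  also have "\<dots> = (\<Sum>n\<le>k. \<Sum>m\<in>{n..k}. g n * of_nat ((k-n) choose (m-n)) * (pochhammer u m * pochhammer (A-u) (k-m)))"
  proof (intro sum.cong refl)
    fix n assume "n \<in> {..k}"
    then have nk: "n \<le> k" by simp
    have "pochhammer u n * pochhammer (A + of_nat n) (k-n) = pochhammer u n * pochhammer ((u + of_nat n) + (A-u)) (k-n)"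
      by (simp add: algebra_simps)
    also have "\<dots> = (\<Sum>r\<le>k-n. of_nat ((k-n) choose r) * (pochhammer u (r+n) * pochhammer (A-u) (k-(r+n))))"
      unfolding pochhammer_binomial_sum[of "u + of_nat n" "A-u" "k-n"] sum_distrib_left
    proof (intro sum.cong refl)
      fix r assume "r \<in> {..k-n}"
      have "pochhammer u (n+r) = pochhammer u n * pochhammer (u + of_nat n) r" by (rule pochhammer_product')
      moreover have "k - n - r = k - (r+n)" by simp
      ultimately show "pochhammer u n * (of_nat ((k-n) choose r) * pochhammer (u + of_nat n) r * pochhammer (A-u) (k-n-r)) =
          of_nat ((k-n) choose r) * (pochhammer u (r+n) * pochhammer (A-u) (k-(r+n)))"
        by (simp add: add.commute mult_ac)
    qed
    also have "\<dots> = (\<Sum>m\<in>{n..k}. of_nat ((k-n) choose (m-n)) * (pochhammer u m * pochhammer (A-u) (k-m)))"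
      using sum.shift_bounds_cl_nat_ivl[of "\<lambda>m. of_nat ((k-n) choose (m-n)) * (pochhammer u m * pochhammer (A-u) (k-m))" 0 n "k-n"] nk
      by (simp add: atLeast0AtMost)
    finally show "g n * (pochhammer u n * pochhammer (A + of_nat n) (k-n)) =
        (\<Sum>m\<in>{n..k}. g n * of_nat ((k-n) choose (m-n)) * (pochhammer u m * pochhammer (A-u) (k-m)))"
      by (simp add: sum_distrib_left mult_ac)
  qed
  also have "\<dots> = (\<Sum>m\<le>k. \<Sum>n\<le>m. g n * of_nat ((k-n) choose (m-n)) * (pochhammer u m * pochhammer (A-u) (k-m)))"
    by (rule tri_swap)
  also have "\<dots> = (\<Sum>m\<le>k. of_nat (k choose m) * Qh c s k j m * (pochhammer u m * pochhammer (A-u) (k-m)))"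
  proof (intro sum.cong refl)
    fix m assume "m \<in> {..k}"
    then have mk: "m \<le> k" by simp
    have "(\<Sum>n\<le>m. g n * of_nat ((k-n) choose (m-n))) = of_nat (k choose m) * Qh c s k j m"
      unfolding Qh_def sum_distrib_left
    proof (intro sum.cong refl)
      fix n assume "n \<in> {..m}"
      then have nm: "n \<le> m" by simp
      have nz: "pochhammer (- of_nat k :: complex) n \<noteq> 0" using nm mk by (intro poch_negk_nz) simp
      have b: "of_nat ((k-n) choose (m-n)) = of_nat (k choose m) * pochhammer (- of_nat m) n / pochhammer (- of_nat k :: complex) n"
        using binom_coef[OF nm mk] nz by (simp add: field_simps)
      show "g n * of_nat ((k-n) choose (m-n)) = of_nat (k choose m) * (piF (c+s-1) n j * pochhammer (- of_nat m) n / (pochhammer c n * pochhammer (- of_nat k) n * fact n))"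
        unfolding b g_def by (simp add: field_simps)
    qed
    then show "(\<Sum>n\<le>m. g n * of_nat ((k-n) choose (m-n)) * (pochhammer u m * pochhammer (A-u) (k-m))) =
        of_nat (k choose m) * Qh c s k j m * (pochhammer u m * pochhammer (A-u) (k-m))"
      by (simp add: sum_distrib_right[symmetric])
  qed
  finally show ?thesis .
qed


lemma hyp_fin:
  assumes "\<And>n. n > N \<Longrightarrow> hyp_term as bs z n = 0"
  shows "hypergeom as bs z = (\<Sum>n\<le>N. hyp_term as bs z n)"
  unfolding hypergeom_def using assms by (intro suminf_finite) auto

lemma ch_eq:
  assumes jk: "j \<le> k"
  shows "cont_hahn j x (of_real a) b (of_real a) d = \<i>^j * pochhammer (2*of_real a) j * pochhammer (of_real a + d) j / fact j
     * Fh (2*of_real a) (b+d) (of_real a + d) (of_real a + \<i> * of_real x) j k"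
proof -
  have e1: "of_nat j + of_real a + b + of_real a + d - 1 = of_nat j + (2*of_real a + (b+d) - 1)" by (simp add: algebra_simps)
  have e2: "(of_real a + of_real a :: complex) = 2*of_real a" by simp
  have "hypergeom [- of_nat j, of_nat j + of_real a + b + of_real a + d - 1, of_real a + \<i> * of_real x]
               [of_real a + of_real a, of_real a + d] 1 =
     (\<Sum>n\<le>k. hyp_term [- of_nat j, of_nat j + of_real a + b + of_real a + d - 1, of_real a + \<i> * of_real x]
               [of_real a + of_real a, of_real a + d] 1 n)"
    using jk by (intro hyp_fin) (simp add: hyp_term_def pochhammer_of_nat_eq_0_lemma)
  also have "\<dots> = Fh (2*of_real a) (b+d) (of_real a + d) (of_real a + \<i> * of_real x) j k"
    unfolding Fh_def hyp_term_def piF_def e1 e2 by (simp add: mult_ac)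
  finally show ?thesis unfolding cont_hahn_def by (simp add: e2)
qed


lemma dbl_swap:
  fixes w :: "nat \<Rightarrow> complex"
  shows "(\<Sum>j\<in>J. w j * (\<Sum>m\<in>M. X m j) * (\<Sum>m'\<in>M. Y m' j)) = (\<Sum>m\<in>M. \<Sum>m'\<in>M. \<Sum>j\<in>J. w j * X m j * Y m' j)"
proof -
  have "(\<Sum>j\<in>J. w j * (\<Sum>m\<in>M. X m j) * (\<Sum>m'\<in>M. Y m' j)) = (\<Sum>j\<in>J. \<Sum>m\<in>M. \<Sum>m'\<in>M. w j * X m j * Y m' j)"
    by (simp add: sum_distrib_left sum_distrib_right mult_ac)
  also have "\<dots> = (\<Sum>m\<in>M. \<Sum>j\<in>J. \<Sum>m'\<in>M. w j * X m j * Y m' j)" by (rule sum.swap)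
  also have "\<dots> = (\<Sum>m\<in>M. \<Sum>m'\<in>M. \<Sum>j\<in>J. w j * X m j * Y m' j)" by (simp only: sum.swap[of _ J])
  finally show ?thesis .
qed

lemma aux_term:
  fixes Pk P2 F Pc Ps Pl PA PA' PK FF FF' I E :: complex
  assumes "I*I = E" "Pc \<noteq> 0" "PA \<noteq> 0" "PA' \<noteq> 0" "F \<noteq> 0" "Ps \<noteq> 0" "Pl \<noteq> 0" "PK \<noteq> 0"
  shows "Pk*P2*F/(Pc*Ps*Pl*PA*PA'*PK) * (I*Pc*PA/F*FF) * (I*Pc*PA'/F*FF') = E*Pk*P2*Pc/(F*Ps*Pl*PK) * FF * FF'"
proof -
  have "Pk*P2*F/(Pc*Ps*Pl*PA*PA'*PK) * (I*Pc*PA/F*FF) * (I*Pc*PA'/F*FF') = (I*I)*Pk*P2*Pc/(F*Ps*Pl*PK) * FF * FF'"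
    using assms(2-) by (simp add: field_simps)
  then show ?thesis using assms(1) by simp
qed

lemma main_LHS_term:
  assumes a: "a > 0" and s0: "Re (b+d) > 0" and A0: "Re (of_real a + d) > 0" and A1: "Re (of_real a + d') > 0"
    and ss: "b + d = b' + d'" and jk: "j \<le> k"
  shows "pochhammer (- of_nat k) j * pochhammer (2 * of_real a + b + d) (2 * j) * fact j /
      (pochhammer (2 * of_real a) j * pochhammer (b + d) j
       * pochhammer (2 * of_real a + b + d + of_nat j - 1) j
       * pochhammer (of_real a + d) j * pochhammer (of_real a + d') j
       * pochhammer (2 * of_real a + b + d + of_nat k) j)
      * cont_hahn j x (of_real a) b (of_real a) d
      * cont_hahn j y (of_real a) b' (of_real a) d'
    = Wt (2 * of_real a) (b+d) k j * Fh (2 * of_real a) (b+d) (of_real a + d) (of_real a + \<i> * of_real x) j k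
        * Fh (2 * of_real a) (b+d) (of_real a + d') (of_real a + \<i> * of_real y) j k"
proof -
  define c where "c = 2 * (of_real a :: complex)"
  define s where "s = b + d"
  have c0: "Re c > 0" using a by (simp add: c_def)
  have s0': "Re s > 0" using s0 by (simp add: s_def)
  have r1: "c + b + d = c + s" by (simp add: s_def)
  have r2: "c + s + of_nat j - 1 = c + s - 1 + of_nat j" by simp
  have r3: "b' + d' = s" using ss by (simp add: s_def)
  have nz: "pochhammer c j \<noteq> 0" "pochhammer (of_real a + d) j \<noteq> 0" "pochhammer (of_real a + d') j \<noteq> 0"
     "(fact j :: complex) \<noteq> 0" "pochhammer s j \<noteq> 0" "pochhammer (c + s + of_nat k) j \<noteq> 0"
    using poch_nz[OF c0] poch_nz[OF A0] poch_nz[OF A1] poch_nz[OF s0'] c0 s0' by (auto intro!: poch_nz)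
  have nzl: "pochhammer (c + s - 1 + of_nat j) j \<noteq> 0"
  proof (cases j)
    case 0 then show ?thesis by simp
  next
    case (Suc i) then show ?thesis using c0 s0' by (intro poch_nz) simp
  qed
  have I: "\<i>^j * \<i>^j = ((-1)^j :: complex)" by (simp add: power_mult_distrib[symmetric])
  show ?thesis
    unfolding ch_eq[OF jk] r1 r2 r3 c_def[symmetric] s_def[symmetric] Wt_def
    by (rule aux_term[OF I nz(1) nz(2) nz(3) nz(4) nz(5) nzl nz(6)])
qed


lemma aux_rhs:
  fixes X1 Y1 X2 Y2 E Pk Ps Pu Pv Pc F :: complex
  assumes "E*E = 1" "Y1 \<noteq> 0" "Y2 \<noteq> 0" "Pc \<noteq> 0" "F \<noteq> 0"
  shows "(X1*Y1)*(X2*Y2) * ((Pk*(Ps*(Pu*(Pv*1))))/(Pc*((E*Y1)*((E*Y2)*1))) * 1/F)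
     = Pk*Ps/(Pc*F) * ((Pu*X1)*(Pv*X2))"
proof -
  have "(X1*Y1)*(X2*Y2) * ((Pk*(Ps*(Pu*(Pv*1))))/(Pc*((E*Y1)*((E*Y2)*1))) * 1/F)
     = (X1*Y1)*(X2*Y2) * ((Pk*(Ps*(Pu*(Pv*1))))/(Pc*((E*E)*Y1*Y2)) * 1/F)" by (simp add: mult_ac)
  also have "\<dots> = Pk*Ps/(Pc*F) * ((Pu*X1)*(Pv*X2))" using assms by (simp add: field_simps)
  finally show ?thesis .
qed

lemma poch_split_refl:
  assumes D: "Re D > 0" and mk: "m \<le> k"
  shows "pochhammer D k = pochhammer D (k-m) * pochhammer (D + of_nat (k-m)) m"
    "pochhammer (1 - of_nat k - D) m = (-1)^m * pochhammer (D + of_nat (k-m)) m"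
    "pochhammer (D + of_nat (k-m)) m \<noteq> 0"
proof -
  show "pochhammer D k = pochhammer D (k-m) * pochhammer (D + of_nat (k-m)) m"
    using pochhammer_product'[of D "k-m" m] mk by simp
  show "pochhammer (1 - of_nat k - D) m = (-1)^m * pochhammer (D + of_nat (k-m)) m"
    using poch_refl[of "1 - of_nat k - D" m] mk by (simp add: of_nat_diff algebra_simps)
  show "pochhammer (D + of_nat (k-m)) m \<noteq> 0" using D by (intro poch_nz) simp
qed

lemma main_RHS_term:
  assumes a: "a > 0" and d0: "Re d > 0" and d1: "Re d' > 0" and mk: "m \<le> k"
  shows "pochhammer (d - \<i> * of_real x) k * pochhammer (d' - \<i> * of_real y) k *
    hyp_term [- of_nat k, 1 - of_nat k - b - d, of_real a + \<i> * of_real x, of_real a + \<i> * of_real y]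
                  [2 * of_real a, 1 - of_nat k - d + \<i> * of_real x, 1 - of_nat k - d' + \<i> * of_real y] 1 m
   = pochhammer (- of_nat k) m * pochhammer (1 - of_nat k - b - d) m / (pochhammer (2 * of_real a) m * fact m) *
      ((pochhammer (of_real a + \<i> * of_real x) m * pochhammer (d - \<i> * of_real x) (k-m)) *
       (pochhammer (of_real a + \<i> * of_real y) m * pochhammer (d' - \<i> * of_real y) (k-m)))"
proof -
  have D0: "Re (d - \<i> * of_real x) > 0" using d0 by simp
  have D1: "Re (d' - \<i> * of_real y) > 0" using d1 by simp
  have q1: "1 - of_nat k - d + \<i> * of_real x = 1 - of_nat k - (d - \<i> * of_real x)" by simp
  have q2: "1 - of_nat k - d' + \<i> * of_real y = 1 - of_nat k - (d' - \<i> * of_real y)" by simp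
  have E: "((-1::complex)^m * (-1)^m) = 1" by (simp add: power_mult_distrib[symmetric])
  have c0: "pochhammer (2 * of_real a) m \<noteq> (0::complex)" using a by (intro poch_nz) simp
  show ?thesis
    unfolding hyp_term_def q1 q2 list.map prod_list.Cons prod_list.Nil power_one
    unfolding poch_split_refl(2)[OF D0 mk] poch_split_refl(2)[OF D1 mk]
    unfolding poch_split_refl(1)[OF D0 mk] poch_split_refl(1)[OF D1 mk]
    by (rule aux_rhs[OF E poch_split_refl(3)[OF D0 mk] poch_split_refl(3)[OF D1 mk] c0 fact_nonzero])
qed


theorem corollary2p5:
  fixes a :: real and b d b' d' :: complex and x y :: real and k :: nat
  assumes "a > 0"
    and "Re b > 0" and "Re d > 0" and "Re b' > 0" and "Re d' > 0"
    and "b + d = b' + d'"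
    and "cnj d = b" and "cnj d' = b'"
  shows "(\<Sum>j=0..k.
      pochhammer (- of_nat k) j * pochhammer (2 * of_real a + b + d) (2 * j) * fact j /
      (pochhammer (2 * of_real a) j * pochhammer (b + d) j
       * pochhammer (2 * of_real a + b + d + of_nat j - 1) j
       * pochhammer (of_real a + d) j * pochhammer (of_real a + d') j
       * pochhammer (2 * of_real a + b + d + of_nat k) j)
      * cont_hahn j x (of_real a) b (of_real a) d
      * cont_hahn j y (of_real a) b' (of_real a) d')
    = pochhammer (d - \<i> * of_real x) k * pochhammer (d' - \<i> * of_real y) k
        * pochhammer (2 * of_real a + b + d) k
      / (pochhammer (of_real a + d) k * pochhammer (of_real a + d') k * pochhammer (b + d) k)
      * hypergeom [- of_nat k, 1 - of_nat k - b - d, of_real a + \<i> * of_real x, of_real a + \<i> * of_real y]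
                  [2 * of_real a, 1 - of_nat k - d + \<i> * of_real x, 1 - of_nat k - d' + \<i> * of_real y] 1"
proof -
  define c where "c = 2 * (of_real a :: complex)"
  define s where "s = b + d"
  define A where "A = of_real a + d"
  define A' where "A' = of_real a + d'"
  define u where "u = of_real a + \<i> * of_real x"
  define v where "v = of_real a + \<i> * of_real y"
  define Dd where "Dd = d - \<i> * of_real x"
  define Dd' where "Dd' = d' - \<i> * of_real y"
  have a0: "a > 0" using assms(1) .
  have c0: "Re c > 0" using a0 by (simp add: c_def)
  have s0: "Re s > 0" using assms(2,3) by (simp add: s_def)
  have A0: "Re A > 0" using a0 assms(3) by (simp add: A_def)
  have A1: "Re A' > 0" using a0 assms(5) by (simp add: A'_def)
  have ss: "b + d = b' + d'" using assms(6) .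
  have nzA: "pochhammer A k \<noteq> 0" "pochhammer A' k \<noteq> 0" using poch_nz[OF A0] poch_nz[OF A1] by auto
  have Au: "A - u = Dd" "A' - v = Dd'" by (simp_all add: A_def u_def Dd_def A'_def v_def Dd'_def)
  define e where "e = (\<lambda>m. (pochhammer u m * pochhammer Dd (k-m)) * (pochhammer v m * pochhammer Dd' (k-m)))"
  define Dm where "Dm = (\<lambda>m. pochhammer (1 - s - of_nat k) m * pochhammer (c+s) k * fact m / (pochhammer (- of_nat k) m * pochhammer c m * pochhammer s k))"
  have L: "(\<Sum>j=0..k.
      pochhammer (- of_nat k) j * pochhammer (2 * of_real a + b + d) (2 * j) * fact j /
      (pochhammer (2 * of_real a) j * pochhammer (b + d) j
       * pochhammer (2 * of_real a + b + d + of_nat j - 1) j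
       * pochhammer (of_real a + d) j * pochhammer (of_real a + d') j
       * pochhammer (2 * of_real a + b + d + of_nat k) j)
      * cont_hahn j x (of_real a) b (of_real a) d
      * cont_hahn j y (of_real a) b' (of_real a) d')
    = (\<Sum>j\<le>k. Wt c s k j * Fh c s A u j k * Fh c s A' v j k)"
    unfolding atLeast0AtMost c_def s_def A_def A'_def u_def v_def
    using main_LHS_term[OF a0 _ _ _ ss] s0 A0 A1 unfolding s_def A_def A'_def
    by (intro sum.cong refl) simp
  have M1: "(\<Sum>j\<le>k. Wt c s k j * Fh c s A u j k * Fh c s A' v j k)
      = 1 / (pochhammer A k * pochhammer A' k) * (\<Sum>j\<le>k. Wt c s k j * (pochhammer A k * Fh c s A u j k) * (pochhammer A' k * Fh c s A' v j k))"
    using nzA by (simp add: sum_distrib_left field_simps)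
  also have "\<dots> = 1 / (pochhammer A k * pochhammer A' k) * (\<Sum>m\<le>k. \<Sum>m'\<le>k. \<Sum>j\<le>k.
       Wt c s k j * (of_nat (k choose m) * Qh c s k j m * (pochhammer u m * pochhammer Dd (k-m)))
                  * (of_nat (k choose m') * Qh c s k j m' * (pochhammer v m' * pochhammer Dd' (k-m'))))"
    unfolding expand[OF c0 A0] expand[OF c0 A1] Au dbl_swap ..
  also have "\<dots> = 1 / (pochhammer A k * pochhammer A' k) * (\<Sum>m\<le>k. of_nat (k choose m) ^ 2 * e m * Dm m)"
  proof -
    have "(\<Sum>m'\<le>k. \<Sum>j\<le>k.
       Wt c s k j * (of_nat (k choose m) * Qh c s k j m * (pochhammer u m * pochhammer Dd (k-m)))
                  * (of_nat (k choose m') * Qh c s k j m' * (pochhammer v m' * pochhammer Dd' (k-m'))))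
       = of_nat (k choose m) ^ 2 * e m * Dm m" if mk: "m \<le> k" for m
    proof -
      have "(\<Sum>m'\<le>k. \<Sum>j\<le>k.
         Wt c s k j * (of_nat (k choose m) * Qh c s k j m * (pochhammer u m * pochhammer Dd (k-m)))
                  * (of_nat (k choose m') * Qh c s k j m' * (pochhammer v m' * pochhammer Dd' (k-m'))))
         = (\<Sum>m'\<le>k. (of_nat (k choose m) * (pochhammer u m * pochhammer Dd (k-m)) * (of_nat (k choose m') * (pochhammer v m' * pochhammer Dd' (k-m'))))
              * (\<Sum>j\<le>k. Wt c s k j * Qh c s k j m * Qh c s k j m'))"
        by (simp add: sum_distrib_left mult_ac)
      also have "\<dots> = (\<Sum>m'\<le>k. (of_nat (k choose m) * (pochhammer u m * pochhammer Dd (k-m)) * (of_nat (k choose m') * (pochhammer v m' * pochhammer Dd' (k-m'))))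
              * (if m = m' then Dm m else 0))"
        unfolding Dm_def by (intro sum.cong refl) (simp add: dual[OF c0 s0 mk])
      also have "\<dots> = of_nat (k choose m) ^ 2 * e m * Dm m"
        using mk by (simp add: e_def power2_eq_square mult_ac if_distrib cong: if_cong)
      finally show ?thesis .
    qed
    then show ?thesis by simp
  qed
  finally have LM: "(\<Sum>j\<le>k. Wt c s k j * Fh c s A u j k * Fh c s A' v j k) = 1 / (pochhammer A k * pochhammer A' k) * (\<Sum>m\<le>k. of_nat (k choose m) ^ 2 * e m * Dm m)" .
  have R: "pochhammer (d - \<i> * of_real x) k * pochhammer (d' - \<i> * of_real y) k
        * pochhammer (2 * of_real a + b + d) k
      / (pochhammer (of_real a + d) k * pochhammer (of_real a + d') k * pochhammer (b + d) k)
      * hypergeom [- of_nat k, 1 - of_nat k - b - d, of_real a + \<i> * of_real x, of_real a + \<i> * of_real y]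
                  [2 * of_real a, 1 - of_nat k - d + \<i> * of_real x, 1 - of_nat k - d' + \<i> * of_real y] 1
     = pochhammer (c+s) k / (pochhammer A k * pochhammer A' k * pochhammer s k) *
        (\<Sum>m\<le>k. pochhammer (- of_nat k) m * pochhammer (1 - of_nat k - b - d) m / (pochhammer c m * fact m) * e m)"
  proof -
    have h: "hypergeom [- of_nat k, 1 - of_nat k - b - d, of_real a + \<i> * of_real x, of_real a + \<i> * of_real y]
                  [2 * of_real a, 1 - of_nat k - d + \<i> * of_real x, 1 - of_nat k - d' + \<i> * of_real y] 1
       = (\<Sum>m\<le>k. hyp_term [- of_nat k, 1 - of_nat k - b - d, of_real a + \<i> * of_real x, of_real a + \<i> * of_real y]
                  [2 * of_real a, 1 - of_nat k - d + \<i> * of_real x, 1 - of_nat k - d' + \<i> * of_real y] 1 m)"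
      by (intro hyp_fin) (simp add: hyp_term_def pochhammer_of_nat_eq_0_lemma)
    have p: "(2 * of_real a + b + d) = c + s" by (simp add: c_def s_def)
    show ?thesis unfolding h sum_distrib_left p
      unfolding A_def[symmetric] A'_def[symmetric] s_def[symmetric]
    proof (intro sum.cong refl)
      fix m assume "m \<in> {..k}"
      then have mk: "m \<le> k" by simp
      note t = main_RHS_term[OF a0 assms(3) assms(5) mk, of x y b]
      show "pochhammer (d - \<i> * of_real x) k * pochhammer (d' - \<i> * of_real y) k * pochhammer (c + s) k /
          (pochhammer A k * pochhammer A' k * pochhammer s k) *
          hyp_term [- of_nat k, 1 - of_nat k - b - d, of_real a + \<i> * of_real x, of_real a + \<i> * of_real y]
                  [2 * of_real a, 1 - of_nat k - d + \<i> * of_real x, 1 - of_nat k - d' + \<i> * of_real y] 1 m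
        = pochhammer (c+s) k / (pochhammer A k * pochhammer A' k * pochhammer s k) *
          (pochhammer (- of_nat k) m * pochhammer (1 - of_nat k - b - d) m / (pochhammer c m * fact m) * e m)"
      proof -
        have "pochhammer (d - \<i> * of_real x) k * pochhammer (d' - \<i> * of_real y) k * pochhammer (c + s) k /
          (pochhammer A k * pochhammer A' k * pochhammer s k) *
          hyp_term [- of_nat k, 1 - of_nat k - b - d, of_real a + \<i> * of_real x, of_real a + \<i> * of_real y]
                  [2 * of_real a, 1 - of_nat k - d + \<i> * of_real x, 1 - of_nat k - d' + \<i> * of_real y] 1 m
          = pochhammer (c + s) k / (pochhammer A k * pochhammer A' k * pochhammer s k) *
           (pochhammer (d - \<i> * of_real x) k * pochhammer (d' - \<i> * of_real y) k *
          hyp_term [- of_nat k, 1 - of_nat k - b - d, of_real a + \<i> * of_real x, of_real a + \<i> * of_real y]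
                  [2 * of_real a, 1 - of_nat k - d + \<i> * of_real x, 1 - of_nat k - d' + \<i> * of_real y] 1 m)"
          by (simp only: divide_inverse mult_ac)
        also have "\<dots> = pochhammer (c+s) k / (pochhammer A k * pochhammer A' k * pochhammer s k) *
          (pochhammer (- of_nat k) m * pochhammer (1 - of_nat k - b - d) m / (pochhammer c m * fact m) * e m)"
          unfolding t unfolding e_def u_def v_def Dd_def Dd'_def c_def by (simp only: mult_ac)
        finally show ?thesis .
      qed
    qed
  qed
  have C: "1 / (pochhammer A k * pochhammer A' k) * (\<Sum>m\<le>k. of_nat (k choose m) ^ 2 * e m * Dm m)
     = pochhammer (c+s) k / (pochhammer A k * pochhammer A' k * pochhammer s k) *
        (\<Sum>m\<le>k. pochhammer (- of_nat k) m * pochhammer (1 - of_nat k - b - d) m / (pochhammer c m * fact m) * e m)"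
  proof -
    have "of_nat (k choose m) ^ 2 * e m * Dm m = pochhammer (c+s) k / pochhammer s k *
        (pochhammer (- of_nat k) m * pochhammer (1 - of_nat k - b - d) m / (pochhammer c m * fact m) * e m)"
      if mk: "m \<le> k" for m
    proof -
      have pk: "pochhammer (- of_nat k :: complex) m = (-1)^m * of_nat (k choose m) * fact m" by (rule poch_neg_binom)
      have nz: "pochhammer (- of_nat k :: complex) m \<noteq> 0" "pochhammer c m \<noteq> 0" "pochhammer s k \<noteq> 0"
        using poch_negk_nz[OF mk] poch_nz[OF c0] poch_nz[OF s0] by auto
      have E: "((-1::complex)^m * (-1)^m) = 1" by (simp add: power_mult_distrib[symmetric])
      have q: "1 - of_nat k - b - d = 1 - s - of_nat k" by (simp add: s_def)
      have "of_nat (k choose m) ^ 2 * fact m / pochhammer (- of_nat k :: complex) m = pochhammer (- of_nat k) m / fact m"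
        using nz(1) unfolding pk using E by (simp add: field_simps power2_eq_square)
      then show ?thesis unfolding Dm_def q using nz by (simp add: field_simps)
    qed
    then have "(\<Sum>m\<le>k. of_nat (k choose m) ^ 2 * e m * Dm m) = pochhammer (c+s) k / pochhammer s k *
        (\<Sum>m\<le>k. pochhammer (- of_nat k) m * pochhammer (1 - of_nat k - b - d) m / (pochhammer c m * fact m) * e m)"
      by (simp add: sum_distrib_left)
    then show ?thesis by (simp add: field_simps)
  qed
  show ?thesis unfolding L LM C R ..
qed


end
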